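(* In a generalised differential Seely category, for every morphism $(f,u):(X,A)\to(Y,B)$ of $LS(\mathscr C)$, $\mathrm D_2(⦃(f,u)⦄)=\pi_1^*(\mathrm{id}_X,u);⦃(f,u)⦄^*i^{Y,\mathcal U(B)}_2$, where $\pi_1:X\times\mathcal U(A)\to X$ and $(\mathrm{id}_X,u):(X,A)\to(X,B)$ is regarded as a morphism of the fibre over $X$.
   Context: Composition is diagrammatic; monoidal categories are strict. Setting: an LNL adjunction $\mathcal F\dashv\mathcal U$, $\mathcal F:\mathscr C\to\mathcal L$, between cartesian $(\mathscr C,\times,I)$ and symmetric monoidal $(\mathcal L,\otimes,1)$; $\mathcal U$ lax monoidal via $n_{A,B}:\mathcal U(A)\times\mathcal U(B)\to\mathcal U(A\otimes B)$; $\mathcal F$ strong monoidal via isomorphisms $m_{X,Y}$, $m_1$; unit $\eta$; $\mathbf c_X:=\mathcal F(\Delta_X);m_{X,X}^{-1}$, $\mathbf w_X:=\mathcal F(t_X);m_1^{-1}$. $LS(\mathscr C)$: objects $(X,A)$; morphisms $(f,u):(X,A)\to(Y,B)$ with $f:X\to Y$, $u:\mathcal F(X)\otimes A\to B$; composition $(f,u);(g,v)=(f;g,(\mathbf c_X\otimes\mathrm{id}_A);(\mathcal F(f)\otimes u);v)$; identity $(\mathrm{id}_X,\mathbf w_X\otimes\mathrm{id}_A)$; $\mathbf{ls}(f,u)=f$; fibre over $X$ = morphisms $(\mathrm{id}_X,u)$; reindexing along $h:X'\to X$: $h^*(X,B)=(X',B)$, $h^*(\mathrm{id}_X,v)=(\mathrm{id}_{X'},(\mathcal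 F(h)\otimes\mathrm{id}_B);v)$. With biproducts $\oplus$ in $\mathcal L$: fibrewise injections $\iota^X_i=(\mathrm{id}_X,\mathbf w_X\otimes\iota_i)$; products in $LS(\mathscr C)$: $(X\times Y,A\oplus B)$ with projections $(\pi_i,\mathbf w_{X\times Y}\otimes\pi_i)$. GDSC: $\mathcal L$ additive (CMon-enriched, $\otimes$ bilinear) with finite products, and a functor $\mathcal T:\mathscr C\to LS(\mathscr C)$ with: (t.1) $\mathbf{ls}\circ\mathcal T=\mathrm{id}$, so $\mathcal T(X)=(X,\lambda(X))$, and $\varphi_{X,Y}:=\langle\mathcal T(\pi_1),\mathcal T(\pi_2)\rangle:\mathcal T(X\times Y)\to(X\times Y,\lambda(X)\oplus\lambda(Y))$ is an isomorphism; (t.2) $\mathcal T(\mathcal U(A))=(\mathcal U(A),A)$; (t.3) with $i^{X,Y}_2:=\iota^{X\times Y}_2;\varphi^{-1}_{X,Y}:(X\times Y,\lambda(Y))\to\mathcal T(X\times Y)$, comprehension $⦃(f,u)⦄:=\langle\pi_1;f,(\eta_X\times\mathrm{id}_{\mathcal U(A)});n_{\mathcal F(X),A};\mathcal U(u)\rangle:X\times\mathcal U(A)\to Y\times\mathcal U(B)$, weakening $W(f,u):=(⦃(f,u)⦄,(\mathcal F(\pi_1)\otimes\mathrm{id}_A);u):(X\times\mathcal U(A),A)\to(Y\times\mathcal U(B),B)$: $W(f,u);i^{Y,\mathcal U(B)}_2=i^{X,\mathcal U(A)}_2;\mathcal T(⦃(f,u)⦄)$. Differential: for $g:X\to Y$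 with $\mathcal T(g)=(g,v)$, $\mathrm D(g):=(\mathrm{id}_X,v):(X,\lambda(X))\to(X,\lambda(Y))$. Partial differential: for $g:X\times Y\to Z$, $\mathrm D_2(g):=i^{X,Y}_2;\mathrm D(g):(X\times Y,\lambda(Y))\to(X\times Y,\lambda(Z))$. *)

theory Defs
  imports Main
begin

section \<open>Categories (objects = a whole type; composition diagrammatic)\<close>

record ('o,'m) cat =
  hom :: "'o \<Rightarrow> 'o \<Rightarrow> 'm set"
  cmp :: "'m \<Rightarrow> 'm \<Rightarrow> 'm"   (* cmp f g = f;g  (first f, then g) *)
  idt :: "'o \<Rightarrow> 'm"

definition is_cat :: "('o,'m,'x) cat_scheme \<Rightarrow> bool" where
  "is_cat K \<longleftrightarrow>
    (\<forall>X. idt K X \<in> hom K X X) \<and>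
    (\<forall>X Y Z f g. f \<in> hom K X Y \<longrightarrow> g \<in> hom K Y Z \<longrightarrow> cmp K f g \<in> hom K X Z) \<and>
    (\<forall>X Y f. f \<in> hom K X Y \<longrightarrow> cmp K (idt K X) f = f \<and> cmp K f (idt K Y) = f) \<and>
    (\<forall>W X Y Z f g h. f \<in> hom K W X \<longrightarrow> g \<in> hom K X Y \<longrightarrow> h \<in> hom K Y Z \<longrightarrow>
        cmp K (cmp K f g) h = cmp K f (cmp K g h))"

definition is_functor :: "('o,'m,'x) cat_scheme \<Rightarrow> ('p,'n,'y) cat_scheme \<Rightarrow>
    ('o \<Rightarrow> 'p) \<Rightarrow> ('m \<Rightarrow> 'n) \<Rightarrow> bool" where
  "is_functor K K' Fo Fm \<longleftrightarrow>
    (\<forall>X Y f. f \<in> hom K X Y \<longrightarrow> Fm f \<in> hom K' (Fo X) (Fo Y)) \<and>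
    (\<forall>X. Fm (idt K X) = idt K' (Fo X)) \<and>
    (\<forall>X Y Z f g. f \<in> hom K X Y \<longrightarrow> g \<in> hom K Y Z \<longrightarrow> Fm (cmp K f g) = cmp K' (Fm f) (Fm g))"

definition is_iso_pair :: "('o,'m,'x) cat_scheme \<Rightarrow> 'o \<Rightarrow> 'o \<Rightarrow> 'm \<Rightarrow> 'm \<Rightarrow> bool" where
  "is_iso_pair K X Y f g \<longleftrightarrow> f \<in> hom K X Y \<and> g \<in> hom K Y X \<and>
     cmp K f g = idt K X \<and> cmp K g f = idt K Y"

section \<open>Strict cartesian category\<close>

record ('o,'m) cart = "('o,'m) cat" +
  prd  :: "'o \<Rightarrow> 'o \<Rightarrow> 'o"
  pr1  :: "'o \<Rightarrow> 'o \<Rightarrow> 'm"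
  pr2  :: "'o \<Rightarrow> 'o \<Rightarrow> 'm"
  tup  :: "'m \<Rightarrow> 'm \<Rightarrow> 'm"
  trm  :: "'o"
  bang :: "'o \<Rightarrow> 'm"

definition cprodm :: "('o,'m,'x) cart_scheme \<Rightarrow> 'o \<Rightarrow> 'o \<Rightarrow> 'm \<Rightarrow> 'm \<Rightarrow> 'm" where
  "cprodm K X Y h k = tup K (cmp K (pr1 K X Y) h) (cmp K (pr2 K X Y) k)"

definition is_cart :: "('o,'m,'x) cart_scheme \<Rightarrow> bool" where
  "is_cart K \<longleftrightarrow> is_cat K \<and>
    (\<forall>X. bang K X \<in> hom K X (trm K) \<and> (\<forall>h \<in> hom K X (trm K). h = bang K X)) \<and>
    (\<forall>X Y. pr1 K X Y \<in> hom K (prd K X Y) X \<and> pr2 K X Y \<in> hom K (prd K X Y) Y) \<and>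
    (\<forall>X Y Z f g. f \<in> hom K Z X \<longrightarrow> g \<in> hom K Z Y \<longrightarrow>
        tup K f g \<in> hom K Z (prd K X Y) \<and>
        cmp K (tup K f g) (pr1 K X Y) = f \<and> cmp K (tup K f g) (pr2 K X Y) = g \<and>
        (\<forall>h \<in> hom K Z (prd K X Y). cmp K h (pr1 K X Y) = f \<and> cmp K h (pr2 K X Y) = g
             \<longrightarrow> h = tup K f g)) \<and>
    \<comment> \<open>strictness of the cartesian monoidal structure\<close>
    (\<forall>X Y Z. prd K (prd K X Y) Z = prd K X (prd K Y Z)) \<and>
    (\<forall>X. prd K (trm K) X = X \<and> prd K X (trm K) = X) \<and>
    (\<forall>X Y Z. tup K (tup K (pr1 K X (prd K Y Z)) (cmp K (pr2 K X (prd K Y Z)) (pr1 K Y Z)))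
                     (cmp K (pr2 K X (prd K Y Z)) (pr2 K Y Z))
             = idt K (prd K X (prd K Y Z))) \<and>
    (\<forall>X. pr2 K (trm K) X = idt K X \<and> pr1 K X (trm K) = idt K X)"

section \<open>Additive strict symmetric monoidal category with finite (bi)products\<close>

record ('o,'m) asmc = "('o,'m) cat" +
  ten  :: "'o \<Rightarrow> 'o \<Rightarrow> 'o"
  tenm :: "'m \<Rightarrow> 'm \<Rightarrow> 'm"
  unt  :: "'o"
  sym  :: "'o \<Rightarrow> 'o \<Rightarrow> 'm"
  zer  :: "'o \<Rightarrow> 'o \<Rightarrow> 'm"
  pls  :: "'m \<Rightarrow> 'm \<Rightarrow> 'm"
  zob  :: "'o"
  bip  :: "'o \<Rightarrow> 'o \<Rightarrow> 'o"
  bpr1 :: "'o \<Rightarrow> 'o \<Rightarrow> 'm"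
  bpr2 :: "'o \<Rightarrow> 'o \<Rightarrow> 'm"
  bin1 :: "'o \<Rightarrow> 'o \<Rightarrow> 'm"
  bin2 :: "'o \<Rightarrow> 'o \<Rightarrow> 'm"

definition is_ssmc :: "('o,'m,'x) asmc_scheme \<Rightarrow> bool" where
  "is_ssmc K \<longleftrightarrow> is_cat K \<and>
    (\<forall>A B C D f g. f \<in> hom K A B \<longrightarrow> g \<in> hom K C D \<longrightarrow> tenm K f g \<in> hom K (ten K A C) (ten K B D)) \<and>
    (\<forall>A B. tenm K (idt K A) (idt K B) = idt K (ten K A B)) \<and>
    (\<forall>A B C A' B' C' f g f' g'. f \<in> hom K A B \<longrightarrow> g \<in> hom K B C \<longrightarrow>
        f' \<in> hom K A' B' \<longrightarrow> g' \<in> hom K B' C' \<longrightarrow>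
        tenm K (cmp K f g) (cmp K f' g') = cmp K (tenm K f f') (tenm K g g')) \<and>
    \<comment> \<open>strictness\<close>
    (\<forall>A B C. ten K (ten K A B) C = ten K A (ten K B C)) \<and>
    (\<forall>A. ten K (unt K) A = A \<and> ten K A (unt K) = A) \<and>
    (\<forall>A B C D E G f g h. f \<in> hom K A B \<longrightarrow> g \<in> hom K C D \<longrightarrow> h \<in> hom K E G \<longrightarrow>
        tenm K (tenm K f g) h = tenm K f (tenm K g h)) \<and>
    (\<forall>A B f. f \<in> hom K A B \<longrightarrow> tenm K (idt K (unt K)) f = f \<and> tenm K f (idt K (unt K)) = f) \<and>
    \<comment> \<open>symmetry\<close>
    (\<forall>A B. sym K A B \<in> hom K (ten K A B) (ten K B A)) \<and>
    (\<forall>A A' B B' f g. f \<in> hom K A A' \<longrightarrow> g \<in> hom K B B' \<longrightarrow>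
        cmp K (tenm K f g) (sym K A' B') = cmp K (sym K A B) (tenm K g f)) \<and>
    (\<forall>A B. cmp K (sym K A B) (sym K B A) = idt K (ten K A B)) \<and>
    (\<forall>A B C. sym K A (ten K B C) =
        cmp K (tenm K (sym K A B) (idt K C)) (tenm K (idt K B) (sym K A C)))"

definition is_additive :: "('o,'m,'x) asmc_scheme \<Rightarrow> bool" where
  "is_additive K \<longleftrightarrow>
    (\<forall>A B. zer K A B \<in> hom K A B) \<and>
    (\<forall>A B f g. f \<in> hom K A B \<longrightarrow> g \<in> hom K A B \<longrightarrow> pls K f g \<in> hom K A B) \<and>
    (\<forall>A B f g h. f \<in> hom K A B \<longrightarrow> g \<in> hom K A B \<longrightarrow> h \<in> hom K A B \<longrightarrow>
        pls K (pls K f g) h = pls K f (pls K g h)) \<and>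
    (\<forall>A B f g. f \<in> hom K A B \<longrightarrow> g \<in> hom K A B \<longrightarrow> pls K f g = pls K g f) \<and>
    (\<forall>A B f. f \<in> hom K A B \<longrightarrow> pls K f (zer K A B) = f) \<and>
    \<comment> \<open>composition is bilinear\<close>
    (\<forall>A B C f g g'. f \<in> hom K A B \<longrightarrow> g \<in> hom K B C \<longrightarrow> g' \<in> hom K B C \<longrightarrow>
        cmp K f (pls K g g') = pls K (cmp K f g) (cmp K f g') \<and>
        cmp K (pls K g g') (zer K C A) = zer K B A \<and>
        cmp K (zer K A B) g = zer K A C \<and> cmp K f (zer K B C) = zer K A C) \<and>
    (\<forall>A B C f f' g. f \<in> hom K A B \<longrightarrow> f' \<in> hom K A B \<longrightarrow> g \<in> hom K B C \<longrightarrow>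
        cmp K (pls K f f') g = pls K (cmp K f g) (cmp K f' g)) \<and>
    \<comment> \<open>tensor is bilinear\<close>
    (\<forall>A B C D f f' g. f \<in> hom K A B \<longrightarrow> f' \<in> hom K A B \<longrightarrow> g \<in> hom K C D \<longrightarrow>
        tenm K (pls K f f') g = pls K (tenm K f g) (tenm K f' g) \<and>
        tenm K g (pls K f f') = pls K (tenm K g f) (tenm K g f') \<and>
        tenm K (zer K A B) g = zer K (ten K A C) (ten K B D) \<and>
        tenm K g (zer K A B) = zer K (ten K C A) (ten K D B))"

definition has_biproducts :: "('o,'m,'x) asmc_scheme \<Rightarrow> bool" where
  "has_biproducts K \<longleftrightarrow>
    (\<forall>A h. h \<in> hom K A (zob K) \<longrightarrow> h = zer K A (zob K)) \<and>
    (\<forall>A B. bpr1 K A B \<in> hom K (bip K A B) A \<and> bpr2 K A B \<in> hom K (bip K A B) B \<and>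
           bin1 K A B \<in> hom K A (bip K A B) \<and> bin2 K A B \<in> hom K B (bip K A B)) \<and>
    (\<forall>A B C f g. f \<in> hom K C A \<longrightarrow> g \<in> hom K C B \<longrightarrow>
        (\<exists>!h. h \<in> hom K C (bip K A B) \<and> cmp K h (bpr1 K A B) = f \<and> cmp K h (bpr2 K A B) = g)) \<and>
    (\<forall>A B. cmp K (bin1 K A B) (bpr1 K A B) = idt K A \<and> cmp K (bin1 K A B) (bpr2 K A B) = zer K A B \<and>
           cmp K (bin2 K A B) (bpr2 K A B) = idt K B \<and> cmp K (bin2 K A B) (bpr1 K A B) = zer K B A \<and>
           pls K (cmp K (bpr1 K A B) (bin1 K A B)) (cmp K (bpr2 K A B) (bin2 K A B)) = idt K (bip K A B))"

section \<open>LNL adjunction + the functor T: data of a GDSC\<close>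

record ('c,'f,'l,'g) gdsc =
  CC  :: "('c,'f) cart"
  LL  :: "('l,'g) asmc"
  Fo  :: "'c \<Rightarrow> 'l"
  Fm  :: "'f \<Rightarrow> 'g"
  mF  :: "'c \<Rightarrow> 'c \<Rightarrow> 'g"
  mFi :: "'c \<Rightarrow> 'c \<Rightarrow> 'g"
  m1  :: "'g"
  m1i :: "'g"
  Uo  :: "'l \<Rightarrow> 'c"
  Um  :: "'g \<Rightarrow> 'f"
  nU  :: "'l \<Rightarrow> 'l \<Rightarrow> 'f"
  n1  :: "'f"
  eta :: "'c \<Rightarrow> 'f"
  eps :: "'l \<Rightarrow> 'g"
  lam :: "'c \<Rightarrow> 'l"          (* T(X) = (X, lam X) *)
  Tv  :: "'f \<Rightarrow> 'g"          (* T(g) = (g, Tv g) *)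

definition cswap :: "('c,'f,'l,'g) gdsc \<Rightarrow> 'c \<Rightarrow> 'c \<Rightarrow> 'f" where
  "cswap D X Y = tup (CC D) (pr2 (CC D) X Y) (pr1 (CC D) X Y)"

definition is_lnl :: "('c,'f,'l,'g) gdsc \<Rightarrow> bool" where
  "is_lnl D \<longleftrightarrow> (let C = CC D; L = LL D; F = Fo D; U = Uo D;
       cC = cmp C; cL = cmp L; xx = prd C; tt = ten L; tm = tenm L; I = trm C; one = unt L in
    is_cart C \<and> is_ssmc L \<and>
    is_functor C L F (Fm D) \<and> is_functor L C U (Um D) \<and>
    \<comment> \<open>F strong symmetric monoidal\<close>
    (\<forall>X Y. is_iso_pair L (tt (F X) (F Y)) (F (xx X Y)) (mF D X Y) (mFi D X Y)) \<and>
    is_iso_pair L one (F I) (m1 D) (m1i D) \<and>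
    (\<forall>X X' Y Y' f g. f \<in> hom C X X' \<longrightarrow> g \<in> hom C Y Y' \<longrightarrow>
        cL (tm (Fm D f) (Fm D g)) (mF D X' Y') = cL (mF D X Y) (Fm D (cprodm C X Y f g))) \<and>
    (\<forall>X Y Z. cL (tm (mF D X Y) (idt L (F Z))) (mF D (xx X Y) Z) =
             cL (tm (idt L (F X)) (mF D Y Z)) (mF D X (xx Y Z))) \<and>
    (\<forall>X. cL (tm (m1 D) (idt L (F X))) (mF D I X) = idt L (F X) \<and>
         cL (tm (idt L (F X)) (m1 D)) (mF D X I) = idt L (F X)) \<and>
    (\<forall>X Y. cL (mF D X Y) (Fm D (cswap D X Y)) = cL (sym L (F X) (F Y)) (mF D Y X)) \<and>
    \<comment> \<open>U lax symmetric monoidal\<close>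
    (\<forall>A B. nU D A B \<in> hom C (xx (U A) (U B)) (U (tt A B))) \<and>
    n1 D \<in> hom C I (U one) \<and>
    (\<forall>A A' B B' f g. f \<in> hom L A A' \<longrightarrow> g \<in> hom L B B' \<longrightarrow>
        cC (cprodm C (U A) (U B) (Um D f) (Um D g)) (nU D A' B') = cC (nU D A B) (Um D (tm f g))) \<and>
    (\<forall>A B E. cC (cprodm C (xx (U A) (U B)) (U E) (nU D A B) (idt C (U E))) (nU D (tt A B) E) =
             cC (cprodm C (U A) (xx (U B) (U E)) (idt C (U A)) (nU D B E)) (nU D A (tt B E))) \<and>
    (\<forall>A. cC (cprodm C I (U A) (n1 D) (idt C (U A))) (nU D one A) = idt C (U A) \<and>
         cC (cprodm C (U A) I (idt C (U A)) (n1 D)) (nU D A one) = idt C (U A)) \<and>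
    (\<forall>A B. cC (nU D A B) (Um D (sym L A B)) = cC (cswap D (U A) (U B)) (nU D B A)) \<and>
    \<comment> \<open>adjunction F -| U\<close>
    (\<forall>X. eta D X \<in> hom C X (U (F X))) \<and>
    (\<forall>A. eps D A \<in> hom L (F (U A)) A) \<and>
    (\<forall>X Y f. f \<in> hom C X Y \<longrightarrow> cC f (eta D Y) = cC (eta D X) (Um D (Fm D f))) \<and>
    (\<forall>A B g. g \<in> hom L A B \<longrightarrow> cL (Fm D (Um D g)) (eps D B) = cL (eps D A) g) \<and>
    (\<forall>X. cL (Fm D (eta D X)) (eps D (F X)) = idt L (F X)) \<and>
    (\<forall>A. cC (eta D (U A)) (Um D (eps D A)) = idt C (U A)) \<and>
    \<comment> \<open>the adjunction is monoidal: unit and counit are monoidal natural transformations\<close>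
    (\<forall>X Y. cC (cC (cprodm C X Y (eta D X) (eta D Y)) (nU D (F X) (F Y))) (Um D (mF D X Y))
           = eta D (xx X Y)) \<and>
    cC (n1 D) (Um D (m1 D)) = eta D I \<and>
    (\<forall>A B. cL (cL (mF D (U A) (U B)) (Fm D (nU D A B))) (eps D (tt A B)) = tm (eps D A) (eps D B)) \<and>
    cL (cL (m1 D) (Fm D (n1 D))) (eps D one) = idt L one)"

section \<open>The category LS(C)\<close>

definition cc :: "('c,'f,'l,'g) gdsc \<Rightarrow> 'c \<Rightarrow> 'g" where
  "cc D X = cmp (LL D) (Fm D (tup (CC D) (idt (CC D) X) (idt (CC D) X))) (mFi D X X)"

definition ww :: "('c,'f,'l,'g) gdsc \<Rightarrow> 'c \<Rightarrow> 'g" where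
  "ww D X = cmp (LL D) (Fm D (bang (CC D) X)) (m1i D)"

definition LShom :: "('c,'f,'l,'g) gdsc \<Rightarrow> 'c \<times> 'l \<Rightarrow> 'c \<times> 'l \<Rightarrow> ('f \<times> 'g) set" where
  "LShom D XA YB = {(f,u). f \<in> hom (CC D) (fst XA) (fst YB) \<and>
                           u \<in> hom (LL D) (ten (LL D) (Fo D (fst XA)) (snd XA)) (snd YB)}"

definition LScomp :: "('c,'f,'l,'g) gdsc \<Rightarrow> 'c \<times> 'l \<Rightarrow> 'f \<times> 'g \<Rightarrow> 'f \<times> 'g \<Rightarrow> 'f \<times> 'g" where
  "LScomp D XA fu gv = (cmp (CC D) (fst fu) (fst gv),
     cmp (LL D) (cmp (LL D) (tenm (LL D) (cc D (fst XA)) (idt (LL D) (snd XA)))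
                            (tenm (LL D) (Fm D (fst fu)) (snd fu))) (snd gv))"

definition LSid :: "('c,'f,'l,'g) gdsc \<Rightarrow> 'c \<times> 'l \<Rightarrow> 'f \<times> 'g" where
  "LSid D XA = (idt (CC D) (fst XA), tenm (LL D) (ww D (fst XA)) (idt (LL D) (snd XA)))"

definition LSinv :: "('c,'f,'l,'g) gdsc \<Rightarrow> 'c \<times> 'l \<Rightarrow> 'c \<times> 'l \<Rightarrow> 'f \<times> 'g \<Rightarrow> 'f \<times> 'g" where
  "LSinv D XA YB h = (THE k. k \<in> LShom D YB XA \<and> LScomp D XA h k = LSid D XA \<and> LScomp D YB k h = LSid D YB)"

definition LSiso :: "('c,'f,'l,'g) gdsc \<Rightarrow> 'c \<times> 'l \<Rightarrow> 'c \<times> 'l \<Rightarrow> 'f \<times> 'g \<Rightarrow> bool" where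
  "LSiso D XA YB h \<longleftrightarrow> h \<in> LShom D XA YB \<and>
     (\<exists>k. k \<in> LShom D YB XA \<and> LScomp D XA h k = LSid D XA \<and> LScomp D YB k h = LSid D YB)"

(* reindexing h^*(id_X, v) along h : X' -> X of a fibre morphism (X,B) -> (X,E) *)
definition reindex :: "('c,'f,'l,'g) gdsc \<Rightarrow> 'c \<Rightarrow> 'f \<Rightarrow> 'l \<Rightarrow> 'f \<times> 'g \<Rightarrow> 'f \<times> 'g" where
  "reindex D X' h B idv = (idt (CC D) X', cmp (LL D) (tenm (LL D) (Fm D h) (idt (LL D) B)) (snd idv))"

definition LSinj2 :: "('c,'f,'l,'g) gdsc \<Rightarrow> 'c \<Rightarrow> 'l \<Rightarrow> 'l \<Rightarrow> 'f \<times> 'g" where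
  "LSinj2 D X A B = (idt (CC D) X, tenm (LL D) (ww D X) (bin2 (LL D) A B))"

definition LSproj1 :: "('c,'f,'l,'g) gdsc \<Rightarrow> 'c \<Rightarrow> 'c \<Rightarrow> 'l \<Rightarrow> 'l \<Rightarrow> 'f \<times> 'g" where
  "LSproj1 D X Y A B = (pr1 (CC D) X Y, tenm (LL D) (ww D (prd (CC D) X Y)) (bpr1 (LL D) A B))"

definition LSproj2 :: "('c,'f,'l,'g) gdsc \<Rightarrow> 'c \<Rightarrow> 'c \<Rightarrow> 'l \<Rightarrow> 'l \<Rightarrow> 'f \<times> 'g" where
  "LSproj2 D X Y A B = (pr2 (CC D) X Y, tenm (LL D) (ww D (prd (CC D) X Y)) (bpr2 (LL D) A B))"

definition Tob :: "('c,'f,'l,'g) gdsc \<Rightarrow> 'c \<Rightarrow> 'c \<times> 'l" where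
  "Tob D X = (X, lam D X)"

definition Tmor :: "('c,'f,'l,'g) gdsc \<Rightarrow> 'f \<Rightarrow> 'f \<times> 'g" where
  "Tmor D g = (g, Tv D g)"

definition phi :: "('c,'f,'l,'g) gdsc \<Rightarrow> 'c \<Rightarrow> 'c \<Rightarrow> 'f \<times> 'g" where
  "phi D X Y = (THE h. h \<in> LShom D (Tob D (prd (CC D) X Y)) (prd (CC D) X Y, bip (LL D) (lam D X) (lam D Y)) \<and>
      LScomp D (Tob D (prd (CC D) X Y)) h (LSproj1 D X Y (lam D X) (lam D Y)) = Tmor D (pr1 (CC D) X Y) \<and>
      LScomp D (Tob D (prd (CC D) X Y)) h (LSproj2 D X Y (lam D X) (lam D Y)) = Tmor D (pr2 (CC D) X Y))"

definition i2 :: "('c,'f,'l,'g) gdsc \<Rightarrow> 'c \<Rightarrow> 'c \<Rightarrow> 'f \<times> 'g" where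
  "i2 D X Y = LScomp D (prd (CC D) X Y, lam D Y)
      (LSinj2 D (prd (CC D) X Y) (lam D X) (lam D Y))
      (LSinv D (Tob D (prd (CC D) X Y)) (prd (CC D) X Y, bip (LL D) (lam D X) (lam D Y)) (phi D X Y))"

definition compr :: "('c,'f,'l,'g) gdsc \<Rightarrow> 'c \<Rightarrow> 'l \<Rightarrow> 'f \<Rightarrow> 'g \<Rightarrow> 'f" where
  "compr D X A f u = tup (CC D) (cmp (CC D) (pr1 (CC D) X (Uo D A)) f)
      (cmp (CC D) (cmp (CC D) (cprodm (CC D) X (Uo D A) (eta D X) (idt (CC D) (Uo D A)))
                              (nU D (Fo D X) A)) (Um D u))"

definition Wk :: "('c,'f,'l,'g) gdsc \<Rightarrow> 'c \<Rightarrow> 'l \<Rightarrow> 'f \<Rightarrow> 'g \<Rightarrow> 'f \<times> 'g" where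
  "Wk D X A f u = (compr D X A f u,
      cmp (LL D) (tenm (LL D) (Fm D (pr1 (CC D) X (Uo D A))) (idt (LL D) A)) u)"

definition Dm :: "('c,'f,'l,'g) gdsc \<Rightarrow> 'c \<Rightarrow> 'f \<Rightarrow> 'f \<times> 'g" where
  "Dm D X g = (idt (CC D) X, Tv D g)"

definition D2 :: "('c,'f,'l,'g) gdsc \<Rightarrow> 'c \<Rightarrow> 'c \<Rightarrow> 'f \<Rightarrow> 'f \<times> 'g" where
  "D2 D X Y g = LScomp D (prd (CC D) X Y, lam D Y) (i2 D X Y) (Dm D (prd (CC D) X Y) g)"

definition is_gdsc :: "('c,'f,'l,'g) gdsc \<Rightarrow> bool" where
  "is_gdsc D \<longleftrightarrow> is_lnl D \<and> is_additive (LL D) \<and> has_biproducts (LL D) \<and>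
    \<comment> \<open>T is a functor C -> LS(C) with ls o T = id\<close>
    (\<forall>X Y g. g \<in> hom (CC D) X Y \<longrightarrow> Tmor D g \<in> LShom D (Tob D X) (Tob D Y)) \<and>
    (\<forall>X. Tmor D (idt (CC D) X) = LSid D (Tob D X)) \<and>
    (\<forall>X Y Z f g. f \<in> hom (CC D) X Y \<longrightarrow> g \<in> hom (CC D) Y Z \<longrightarrow>
        Tmor D (cmp (CC D) f g) = LScomp D (Tob D X) (Tmor D f) (Tmor D g)) \<and>
    \<comment> \<open>(t.1)\<close>
    (\<forall>X Y. LSiso D (Tob D (prd (CC D) X Y)) (prd (CC D) X Y, bip (LL D) (lam D X) (lam D Y)) (phi D X Y)) \<and>
    \<comment> \<open>(t.2)\<close>
    (\<forall>A. lam D (Uo D A) = A) \<and>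
    \<comment> \<open>(t.3)\<close>
    (\<forall>X Y A B f u. f \<in> hom (CC D) X Y \<longrightarrow> u \<in> hom (LL D) (ten (LL D) (Fo D X) A) B \<longrightarrow>
        LScomp D (prd (CC D) X (Uo D A), A) (Wk D X A f u) (i2 D Y (Uo D B)) =
        LScomp D (prd (CC D) X (Uo D A), lam D (Uo D A)) (i2 D X (Uo D A)) (Tmor D (compr D X A f u)))"

end

theory Submission imports Defs begin

locale GDS = fixes D :: "('c,'f,'l,'g) gdsc" assumes gd: "is_gdsc D"
begin

lemmas gdU = gd[unfolded is_gdsc_def]
lemma lnl: "is_lnl D" by (rule gdU[THEN conjunct1, rule_format])
lemmas lnlU = lnl[unfolded is_lnl_def Let_def]
lemma cartC: "is_cart (CC D)" by (rule lnlU[THEN conjunct1, rule_format])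
lemma ssmcL: "is_ssmc (LL D)" by (rule lnlU[THEN conjunct2, THEN conjunct1, rule_format])
lemmas cartU = cartC[unfolded is_cart_def]
lemmas ssmcU = ssmcL[unfolded is_ssmc_def]
lemma catC: "is_cat (CC D)" by (rule cartU[THEN conjunct1, rule_format])
lemma catL: "is_cat (LL D)" by (rule ssmcU[THEN conjunct1, rule_format])
lemma funF: "is_functor (CC D) (LL D) (Fo D) (Fm D)" by (rule lnlU[THEN conjunct2, THEN conjunct2, THEN conjunct1, rule_format])
lemmas funU = funF[unfolded is_functor_def]
lemma bipL: "has_biproducts (LL D)" by (rule gdU[THEN conjunct2, THEN conjunct2, THEN conjunct1, rule_format])
lemmas bipU = bipL[unfolded has_biproducts_def]
lemmas cC = catC[unfolded is_cat_def]
lemmas cL = catL[unfolded is_cat_def]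
lemma C_id[intro,simp]: "idt (CC D) X \<in> hom (CC D) X X" by (simp add: cC)
lemma C_cmp[intro]: "f \<in> hom (CC D) X Y \<Longrightarrow> g \<in> hom (CC D) Y Z \<Longrightarrow> cmp (CC D) f g \<in> hom (CC D) X Z"
  by (rule cC[THEN conjunct2, THEN conjunct1, rule_format]; assumption?)
lemma C_idl[simp]: "f \<in> hom (CC D) X Y \<Longrightarrow> cmp (CC D) (idt (CC D) X) f = f"
  by (rule cC[THEN conjunct2, THEN conjunct2, THEN conjunct1, rule_format, THEN conjunct1]; assumption?)
lemma C_idr[simp]: "f \<in> hom (CC D) X Y \<Longrightarrow> cmp (CC D) f (idt (CC D) Y) = f"
  by (rule cC[THEN conjunct2, THEN conjunct2, THEN conjunct1, rule_format, THEN conjunct2]; assumption?)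
lemma C_assoc: "f \<in> hom (CC D) W X \<Longrightarrow> g \<in> hom (CC D) X Y \<Longrightarrow> h \<in> hom (CC D) Y Z \<Longrightarrow>
   cmp (CC D) (cmp (CC D) f g) h = cmp (CC D) f (cmp (CC D) g h)"
  by (rule cC[THEN conjunct2, THEN conjunct2, THEN conjunct2, rule_format]; assumption)

lemma L_id[intro,simp]: "idt (LL D) X \<in> hom (LL D) X X" by (simp add: cL)
lemma L_cmp[intro]: "f \<in> hom (LL D) X Y \<Longrightarrow> g \<in> hom (LL D) Y Z \<Longrightarrow> cmp (LL D) f g \<in> hom (LL D) X Z"
  by (rule cL[THEN conjunct2, THEN conjunct1, rule_format]; assumption?)
lemma L_idl[simp]: "f \<in> hom (LL D) X Y \<Longrightarrow> cmp (LL D) (idt (LL D) X) f = f"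
  by (rule cL[THEN conjunct2, THEN conjunct2, THEN conjunct1, rule_format, THEN conjunct1]; assumption?)
lemma L_idr[simp]: "f \<in> hom (LL D) X Y \<Longrightarrow> cmp (LL D) f (idt (LL D) Y) = f"
  by (rule cL[THEN conjunct2, THEN conjunct2, THEN conjunct1, rule_format, THEN conjunct2]; assumption?)
lemma L_assoc: "f \<in> hom (LL D) W X \<Longrightarrow> g \<in> hom (LL D) X Y \<Longrightarrow> h \<in> hom (LL D) Y Z \<Longrightarrow>
   cmp (LL D) (cmp (LL D) f g) h = cmp (LL D) f (cmp (LL D) g h)"
  by (rule cL[THEN conjunct2, THEN conjunct2, THEN conjunct2, rule_format]; assumption)

lemma L_idid[simp]: "cmp (LL D) (idt (LL D) A) (idt (LL D) A) = idt (LL D) A" by (rule L_idl, rule L_id)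
lemma C_idid[simp]: "cmp (CC D) (idt (CC D) A) (idt (CC D) A) = idt (CC D) A" by (rule C_idl, rule C_id)
lemma pr1_hom[intro,simp]: "pr1 (CC D) X Y \<in> hom (CC D) (prd (CC D) X Y) X" by (rule cartU[THEN conjunct2, THEN conjunct2, THEN conjunct1, rule_format, THEN conjunct1]; assumption?)
lemma pr2_hom[intro,simp]: "pr2 (CC D) X Y \<in> hom (CC D) (prd (CC D) X Y) Y" by (rule cartU[THEN conjunct2, THEN conjunct2, THEN conjunct1, rule_format, THEN conjunct2]; assumption?)
lemmas tupall = cartU[THEN conjunct2, THEN conjunct2, THEN conjunct2, THEN conjunct1, rule_format]
lemma tup_hom[intro]: "f \<in> hom (CC D) Z X \<Longrightarrow> g \<in> hom (CC D) Z Y \<Longrightarrow> tup (CC D) f g \<in> hom (CC D) Z (prd (CC D) X Y)"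
  by (rule tupall[THEN conjunct1]; assumption)
lemma tup_pr1[simp]: "f \<in> hom (CC D) Z X \<Longrightarrow> g \<in> hom (CC D) Z Y \<Longrightarrow> cmp (CC D) (tup (CC D) f g) (pr1 (CC D) X Y) = f"
  by (rule tupall[THEN conjunct2, THEN conjunct1]; assumption)
lemma tup_pr2[simp]: "f \<in> hom (CC D) Z X \<Longrightarrow> g \<in> hom (CC D) Z Y \<Longrightarrow> cmp (CC D) (tup (CC D) f g) (pr2 (CC D) X Y) = g"
  by (rule tupall[THEN conjunct2, THEN conjunct2, THEN conjunct1]; assumption)
lemma tup_uniq: "f \<in> hom (CC D) Z X \<Longrightarrow> g \<in> hom (CC D) Z Y \<Longrightarrow> h \<in> hom (CC D) Z (prd (CC D) X Y) \<Longrightarrow>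
   cmp (CC D) h (pr1 (CC D) X Y) = f \<Longrightarrow> cmp (CC D) h (pr2 (CC D) X Y) = g \<Longrightarrow> h = tup (CC D) f g"
  by (rule tupall[THEN conjunct2, THEN conjunct2, THEN conjunct2, rule_format], assumption+, rule conjI, assumption+)
lemma bang_hom[intro,simp]: "bang (CC D) X \<in> hom (CC D) X (trm (CC D))" by (rule cartU[THEN conjunct2, THEN conjunct1, rule_format, THEN conjunct1]; assumption?)
lemma prd_assoc[simp]: "prd (CC D) (prd (CC D) X Y) Z = prd (CC D) X (prd (CC D) Y Z)" by (rule cartU[THEN conjunct2, THEN conjunct2, THEN conjunct2, THEN conjunct2, THEN conjunct1, rule_format]; assumption?)
lemma prd_I[simp]: "prd (CC D) (trm (CC D)) X = X" "prd (CC D) X (trm (CC D)) = X"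
  by (rule cartU[THEN conjunct2, THEN conjunct2, THEN conjunct2, THEN conjunct2, THEN conjunct2, THEN conjunct1, rule_format, THEN conjunct1], rule cartU[THEN conjunct2, THEN conjunct2, THEN conjunct2, THEN conjunct2, THEN conjunct2, THEN conjunct1, rule_format, THEN conjunct2])
lemma pr_I[simp]: "pr2 (CC D) (trm (CC D)) X = idt (CC D) X" "pr1 (CC D) X (trm (CC D)) = idt (CC D) X"
  by (rule cartU[THEN conjunct2, THEN conjunct2, THEN conjunct2, THEN conjunct2, THEN conjunct2, THEN conjunct2, THEN conjunct2, rule_format, THEN conjunct1], rule cartU[THEN conjunct2, THEN conjunct2, THEN conjunct2, THEN conjunct2, THEN conjunct2, THEN conjunct2, THEN conjunct2, rule_format, THEN conjunct2])
lemma strict_tup: "tup (CC D) (tup (CC D) (pr1 (CC D) X (prd (CC D) Y Z)) (cmp (CC D) (pr2 (CC D) X (prd (CC D) Y Z)) (pr1 (CC D) Y Z)))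
                     (cmp (CC D) (pr2 (CC D) X (prd (CC D) Y Z)) (pr2 (CC D) Y Z))
             = idt (CC D) (prd (CC D) X (prd (CC D) Y Z))" by (rule cartU[THEN conjunct2, THEN conjunct2, THEN conjunct2, THEN conjunct2, THEN conjunct2, THEN conjunct2, THEN conjunct1, rule_format]; assumption?)

lemma F_hom[intro]: "f \<in> hom (CC D) X Y \<Longrightarrow> Fm D f \<in> hom (LL D) (Fo D X) (Fo D Y)"
  by (rule funU[THEN conjunct1, rule_format]; assumption?)
lemma F_id[simp]: "Fm D (idt (CC D) X) = idt (LL D) (Fo D X)"
  by (rule funU[THEN conjunct2, THEN conjunct1, rule_format]; assumption?)
lemma F_cmp: "f \<in> hom (CC D) X Y \<Longrightarrow> g \<in> hom (CC D) Y Z \<Longrightarrow> Fm D (cmp (CC D) f g) = cmp (LL D) (Fm D f) (Fm D g)"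
  by (rule funU[THEN conjunct2, THEN conjunct2, rule_format]; assumption)

lemma T_hom[intro]: "g \<in> hom (CC D) X Y \<Longrightarrow> Tv D g \<in> hom (LL D) (ten (LL D) (Fo D X) (lam D X)) (lam D Y)"
proof -
  assume g: "g \<in> hom (CC D) X Y"
  have "Tmor D g \<in> LShom D (Tob D X) (Tob D Y)" by (rule gdU[THEN conjunct2, THEN conjunct2, THEN conjunct2, THEN conjunct1, rule_format, OF g])
  then show ?thesis unfolding Tmor_def LShom_def Tob_def by simp
qed

lemma tenm_hom[intro]: "f \<in> hom (LL D) A B \<Longrightarrow> g \<in> hom (LL D) C E \<Longrightarrow> tenm (LL D) f g \<in> hom (LL D) (ten (LL D) A C) (ten (LL D) B E)"
  by (rule ssmcU[THEN conjunct2, THEN conjunct1, rule_format]; assumption?)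
lemma tenm_id[simp]: "tenm (LL D) (idt (LL D) A) (idt (LL D) B) = idt (LL D) (ten (LL D) A B)"
  by (rule ssmcU[THEN conjunct2, THEN conjunct2, THEN conjunct1, rule_format]; assumption?)
lemma tenm_cmp: "f \<in> hom (LL D) A B \<Longrightarrow> g \<in> hom (LL D) B C \<Longrightarrow> f' \<in> hom (LL D) A' B' \<Longrightarrow> g' \<in> hom (LL D) B' C' \<Longrightarrow>
        tenm (LL D) (cmp (LL D) f g) (cmp (LL D) f' g') = cmp (LL D) (tenm (LL D) f f') (tenm (LL D) g g')"
  by (rule ssmcU[THEN conjunct2, THEN conjunct2, THEN conjunct2, THEN conjunct1, rule_format]; assumption)
lemma ten_assoc[simp]: "ten (LL D) (ten (LL D) A B) C = ten (LL D) A (ten (LL D) B C)"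
  by (rule ssmcU[THEN conjunct2, THEN conjunct2, THEN conjunct2, THEN conjunct2, THEN conjunct1, rule_format]; assumption?)
lemma ten_unt[simp]: "ten (LL D) (unt (LL D)) A = A" "ten (LL D) A (unt (LL D)) = A"
  by (rule ssmcU[THEN conjunct2, THEN conjunct2, THEN conjunct2, THEN conjunct2, THEN conjunct2, THEN conjunct1, rule_format, THEN conjunct1], rule ssmcU[THEN conjunct2, THEN conjunct2, THEN conjunct2, THEN conjunct2, THEN conjunct2, THEN conjunct1, rule_format, THEN conjunct2])
lemma tenm_assoc: "f \<in> hom (LL D) A B \<Longrightarrow> g \<in> hom (LL D) C E \<Longrightarrow> h \<in> hom (LL D) E' G \<Longrightarrow>
        tenm (LL D) (tenm (LL D) f g) h = tenm (LL D) f (tenm (LL D) g h)"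
  by (rule ssmcU[THEN conjunct2, THEN conjunct2, THEN conjunct2, THEN conjunct2, THEN conjunct2, THEN conjunct2, THEN conjunct1, rule_format]; assumption)
lemma tenm_unt: "f \<in> hom (LL D) A B \<Longrightarrow> tenm (LL D) (idt (LL D) (unt (LL D))) f = f"
   "f \<in> hom (LL D) A B \<Longrightarrow> tenm (LL D) f (idt (LL D) (unt (LL D))) = f"
  by (erule ssmcU[THEN conjunct2, THEN conjunct2, THEN conjunct2, THEN conjunct2, THEN conjunct2, THEN conjunct2, THEN conjunct2, THEN conjunct1, rule_format, THEN conjunct1], erule ssmcU[THEN conjunct2, THEN conjunct2, THEN conjunct2, THEN conjunct2, THEN conjunct2, THEN conjunct2, THEN conjunct2, THEN conjunct1, rule_format, THEN conjunct2])

lemmas isoU = lnlU[THEN conjunct2, THEN conjunct2, THEN conjunct2, THEN conjunct2, THEN conjunct1, rule_format, unfolded is_iso_pair_def]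
lemmas iso1U = lnlU[THEN conjunct2, THEN conjunct2, THEN conjunct2, THEN conjunct2, THEN conjunct2, THEN conjunct1, unfolded is_iso_pair_def]
lemma mF_hom[intro]: "mF D X Y \<in> hom (LL D) (ten (LL D) (Fo D X) (Fo D Y)) (Fo D (prd (CC D) X Y))"
  by (rule isoU[THEN conjunct1])
lemma mFi_hom[intro]: "mFi D X Y \<in> hom (LL D) (Fo D (prd (CC D) X Y)) (ten (LL D) (Fo D X) (Fo D Y))"
  by (rule isoU[THEN conjunct2, THEN conjunct1])
lemma mF_inv: "cmp (LL D) (mF D X Y) (mFi D X Y) = idt (LL D) (ten (LL D) (Fo D X) (Fo D Y))"
   "cmp (LL D) (mFi D X Y) (mF D X Y) = idt (LL D) (Fo D (prd (CC D) X Y))"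
  by (rule isoU[THEN conjunct2, THEN conjunct2, THEN conjunct1], rule isoU[THEN conjunct2, THEN conjunct2, THEN conjunct2])
lemma m1_hom[intro]: "m1 D \<in> hom (LL D) (unt (LL D)) (Fo D (trm (CC D)))" "m1i D \<in> hom (LL D) (Fo D (trm (CC D))) (unt (LL D))"
  by (rule iso1U[THEN conjunct1], rule iso1U[THEN conjunct2, THEN conjunct1])
lemma m1_inv: "cmp (LL D) (m1 D) (m1i D) = idt (LL D) (unt (LL D))" "cmp (LL D) (m1i D) (m1 D) = idt (LL D) (Fo D (trm (CC D)))"
  by (rule iso1U[THEN conjunct2, THEN conjunct2, THEN conjunct1], rule iso1U[THEN conjunct2, THEN conjunct2, THEN conjunct2])
lemma mF_nat: "f \<in> hom (CC D) X X' \<Longrightarrow> g \<in> hom (CC D) Y Y' \<Longrightarrow>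
   cmp (LL D) (tenm (LL D) (Fm D f) (Fm D g)) (mF D X' Y') = cmp (LL D) (mF D X Y) (Fm D (cprodm (CC D) X Y f g))"
  by (rule lnlU[THEN conjunct2, THEN conjunct2, THEN conjunct2, THEN conjunct2, THEN conjunct2, THEN conjunct2, THEN conjunct1, rule_format]; assumption)
lemma mF_assoc: "cmp (LL D) (tenm (LL D) (mF D X Y) (idt (LL D) (Fo D Z))) (mF D (prd (CC D) X Y) Z) =
             cmp (LL D) (tenm (LL D) (idt (LL D) (Fo D X)) (mF D Y Z)) (mF D X (prd (CC D) Y Z))"
  by (rule lnlU[THEN conjunct2, THEN conjunct2, THEN conjunct2, THEN conjunct2, THEN conjunct2, THEN conjunct2, THEN conjunct2, THEN conjunct1, rule_format])
lemma mF_unit: "cmp (LL D) (tenm (LL D) (m1 D) (idt (LL D) (Fo D X))) (mF D (trm (CC D)) X) = idt (LL D) (Fo D X)"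
   "cmp (LL D) (tenm (LL D) (idt (LL D) (Fo D X)) (m1 D)) (mF D X (trm (CC D))) = idt (LL D) (Fo D X)"
  by (rule lnlU[THEN conjunct2, THEN conjunct2, THEN conjunct2, THEN conjunct2, THEN conjunct2, THEN conjunct2, THEN conjunct2, THEN conjunct2, THEN conjunct1, rule_format, THEN conjunct1], rule lnlU[THEN conjunct2, THEN conjunct2, THEN conjunct2, THEN conjunct2, THEN conjunct2, THEN conjunct2, THEN conjunct2, THEN conjunct2, THEN conjunct1, rule_format, THEN conjunct2])


abbreviation lc (infixl "\<cdot>" 55) where "f \<cdot> g \<equiv> cmp (LL D) f g"
abbreviation ccp (infixl "\<bullet>" 55) where "f \<bullet> g \<equiv> cmp (CC D) f g"
abbreviation tm (infixl "\<otimes>" 60) where "f \<otimes> g \<equiv> tenm (LL D) f g"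
abbreviation to (infixl "\<odot>" 60) where "A \<odot> B \<equiv> ten (LL D) A B"
abbreviation iL where "iL A \<equiv> idt (LL D) A"
abbreviation iC where "iC X \<equiv> idt (CC D) X"
abbreviation px (infixl "\<times>\<^sub>c" 60) where "X \<times>\<^sub>c Y \<equiv> prd (CC D) X Y"
abbreviation homL where "homL \<equiv> hom (LL D)"
abbreviation homC where "homC \<equiv> hom (CC D)"
abbreviation dl where "dl X \<equiv> tup (CC D) (iC X) (iC X)"

lemma bang_uniq: "h \<in> homC X (trm (CC D)) \<Longrightarrow> h = bang (CC D) X"
  by (rule cartU[THEN conjunct2, THEN conjunct1, rule_format, THEN conjunct2, rule_format]; assumption?)

lemma tup_cmp: "h \<in> homC W Z \<Longrightarrow> f \<in> homC Z X \<Longrightarrow> g \<in> homC Z Y \<Longrightarrow>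
   h \<bullet> tup (CC D) f g = tup (CC D) (h \<bullet> f) (h \<bullet> g)"
proof (rule tup_uniq)
  assume h: "h \<in> homC W Z" and f: "f \<in> homC Z X" and g: "g \<in> homC Z Y"
  show "h \<bullet> tup (CC D) f g \<bullet> pr1 (CC D) X Y = h \<bullet> f"
    using C_assoc[OF h tup_hom[OF f g] pr1_hom] f g by simp
  show "h \<bullet> tup (CC D) f g \<bullet> pr2 (CC D) X Y = h \<bullet> g"
    using C_assoc[OF h tup_hom[OF f g] pr2_hom] f g by simp
qed auto

lemma tup_eta: "h \<in> homC Z (X \<times>\<^sub>c Y) \<Longrightarrow> tup (CC D) (h \<bullet> pr1 (CC D) X Y) (h \<bullet> pr2 (CC D) X Y) = h"
  by (rule tup_uniq[symmetric]) auto

lemma dl_hom[intro]: "dl X \<in> homC X (X \<times>\<^sub>c X)" by auto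
lemma dl_pr[simp]: "dl X \<bullet> pr1 (CC D) X X = iC X" "dl X \<bullet> pr2 (CC D) X X = iC X"
  by (rule tup_pr1 tup_pr2; rule C_id)+

lemma pa1: "pr1 (CC D) (X \<times>\<^sub>c Y) Z = tup (CC D) (pr1 (CC D) X (Y \<times>\<^sub>c Z)) (pr2 (CC D) X (Y \<times>\<^sub>c Z) \<bullet> pr1 (CC D) Y Z)"
   "pr2 (CC D) (X \<times>\<^sub>c Y) Z = pr2 (CC D) X (Y \<times>\<^sub>c Z) \<bullet> pr2 (CC D) Y Z"
proof -
  let ?a = "tup (CC D) (pr1 (CC D) X (Y \<times>\<^sub>c Z)) (pr2 (CC D) X (Y \<times>\<^sub>c Z) \<bullet> pr1 (CC D) Y Z)"
  let ?b = "pr2 (CC D) X (Y \<times>\<^sub>c Z) \<bullet> pr2 (CC D) Y Z"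
  have a: "?a \<in> homC (X \<times>\<^sub>c (Y \<times>\<^sub>c Z)) (X \<times>\<^sub>c Y)" by auto
  have b: "?b \<in> homC (X \<times>\<^sub>c (Y \<times>\<^sub>c Z)) Z" by auto
  have e: "tup (CC D) ?a ?b = iC (X \<times>\<^sub>c (Y \<times>\<^sub>c Z))" by (rule strict_tup)
  have "pr1 (CC D) (X \<times>\<^sub>c Y) Z = iC (X \<times>\<^sub>c (Y \<times>\<^sub>c Z)) \<bullet> pr1 (CC D) (X \<times>\<^sub>c Y) Z"
    using pr1_hom[of "X \<times>\<^sub>c Y" Z] by simp
  also have "\<dots> = ?a" unfolding e[symmetric] using a b tup_pr1[OF a b] by simp
  finally show "pr1 (CC D) (X \<times>\<^sub>c Y) Z = ?a" .
  have "pr2 (CC D) (X \<times>\<^sub>c Y) Z = iC (X \<times>\<^sub>c (Y \<times>\<^sub>c Z)) \<bullet> pr2 (CC D) (X \<times>\<^sub>c Y) Z"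
    using pr2_hom[of "X \<times>\<^sub>c Y" Z] by simp
  also have "\<dots> = ?b" unfolding e[symmetric] using a b tup_pr2[OF a b] by simp
  finally show "pr2 (CC D) (X \<times>\<^sub>c Y) Z = ?b" .
qed

lemma cprodm_hom[intro]: "h \<in> homC X X' \<Longrightarrow> k \<in> homC Y Y' \<Longrightarrow> cprodm (CC D) X Y h k \<in> homC (X \<times>\<^sub>c Y) (X' \<times>\<^sub>c Y')"
  unfolding cprodm_def by auto

lemma dl_cprodm: "f \<in> homC X Y \<Longrightarrow> g \<in> homC X Z \<Longrightarrow> dl X \<bullet> cprodm (CC D) X X f g = tup (CC D) f g"
  unfolding cprodm_def
  by (subst tup_cmp) (auto simp: C_assoc[symmetric, OF dl_hom pr1_hom] C_assoc[symmetric, OF dl_hom pr2_hom])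

lemma dl_bang1: "dl X \<bullet> cprodm (CC D) X X (bang (CC D) X) (iC X) = iC X"
proof -
  have h: "tup (CC D) (bang (CC D) X) (iC X) \<in> homC X X" using tup_hom[of "bang (CC D) X" X "trm (CC D)" "iC X" X] by simp
  have "tup (CC D) (bang (CC D) X) (iC X) = tup (CC D) (bang (CC D) X) (iC X) \<bullet> pr2 (CC D) (trm (CC D)) X"
    using h by simp
  also have "\<dots> = iC X" by (rule tup_pr2) auto
  finally show ?thesis by (subst dl_cprodm) auto
qed

lemma dl_bang2: "dl X \<bullet> cprodm (CC D) X X (iC X) (bang (CC D) X) = iC X"
proof -
  have h: "tup (CC D) (iC X) (bang (CC D) X) \<in> homC X X" using tup_hom[of "iC X" X X "bang (CC D) X" "trm (CC D)"] by simp
  have "tup (CC D) (iC X) (bang (CC D) X) = tup (CC D) (iC X) (bang (CC D) X) \<bullet> pr1 (CC D) X (trm (CC D))"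
    using h by simp
  also have "\<dots> = iC X" by (rule tup_pr1) auto
  finally show ?thesis by (subst dl_cprodm) auto
qed

lemma dl_coassoc: "dl X \<bullet> cprodm (CC D) X X (dl X) (iC X) = dl X \<bullet> cprodm (CC D) X X (iC X) (dl X)"
proof -
  let ?m = "tup (CC D) (dl X) (iC X)"
  have m: "?m \<in> homC X (X \<times>\<^sub>c (X \<times>\<^sub>c X))" using tup_hom[of "dl X" X "X \<times>\<^sub>c X" "iC X" X] by auto
  have m1: "?m \<bullet> pr1 (CC D) (X \<times>\<^sub>c X) X = dl X" by (rule tup_pr1[OF dl_hom C_id])
  have m2: "?m \<bullet> pr2 (CC D) (X \<times>\<^sub>c X) X = iC X" by (rule tup_pr2[OF dl_hom C_id])
  have p1: "pr1 (CC D) (X \<times>\<^sub>c X) X \<in> homC (X \<times>\<^sub>c (X \<times>\<^sub>c X)) (X \<times>\<^sub>c X)"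
    using pr1_hom[of "X \<times>\<^sub>c X" X] by simp
  have q1: "?m \<bullet> pr1 (CC D) X (X \<times>\<^sub>c X) = iC X"
  proof -
    have "pr1 (CC D) X (X \<times>\<^sub>c X) = pr1 (CC D) (X \<times>\<^sub>c X) X \<bullet> pr1 (CC D) X X"
      by (subst pa1(1)) (rule tup_pr1[symmetric], auto)
    then have "?m \<bullet> pr1 (CC D) X (X \<times>\<^sub>c X) = (?m \<bullet> pr1 (CC D) (X \<times>\<^sub>c X) X) \<bullet> pr1 (CC D) X X"
      using C_assoc[OF m p1 pr1_hom] by simp
    then show ?thesis using m1 by simp
  qed
  let ?n = "?m \<bullet> pr2 (CC D) X (X \<times>\<^sub>c X)"
  have n: "?n \<in> homC X (X \<times>\<^sub>c X)" using m by auto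
  have n1: "?n \<bullet> pr1 (CC D) X X = iC X"
  proof -
    have "pr2 (CC D) X (X \<times>\<^sub>c X) \<bullet> pr1 (CC D) X X = pr1 (CC D) (X \<times>\<^sub>c X) X \<bullet> pr2 (CC D) X X"
      by (subst pa1(1)) (rule tup_pr2[symmetric], auto)
    then have "?n \<bullet> pr1 (CC D) X X = (?m \<bullet> pr1 (CC D) (X \<times>\<^sub>c X) X) \<bullet> pr2 (CC D) X X"
      using C_assoc[OF m pr2_hom pr1_hom] C_assoc[OF m p1 pr2_hom] by simp
    then show ?thesis using m1 by simp
  qed
  have n2: "?n \<bullet> pr2 (CC D) X X = iC X"
    using m m2 pa1(2)[of X X X] C_assoc[OF m pr2_hom pr2_hom] by simp
  have nd: "?n = dl X" using tup_uniq[OF _ _ n n1 n2] by simp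
  have "?m = tup (CC D) (iC X) (dl X)" using tup_uniq[OF _ _ m q1 nd] by auto
  then show ?thesis by (simp add: dl_cprodm[OF dl_hom C_id] dl_cprodm[OF C_id dl_hom])
qed


lemma mFi_nat: assumes f: "f \<in> homC X X'" and g: "g \<in> homC Y Y'"
  shows "mFi D X Y \<cdot> (Fm D f \<otimes> Fm D g) = Fm D (cprodm (CC D) X Y f g) \<cdot> mFi D X' Y'"
proof -
  have N: "Fm D f \<otimes> Fm D g \<in> homL (Fo D X \<odot> Fo D Y) (Fo D X' \<odot> Fo D Y')" using f g by blast
  have K: "Fm D (cprodm (CC D) X Y f g) \<in> homL (Fo D (X \<times>\<^sub>c Y)) (Fo D (X' \<times>\<^sub>c Y'))" using f g by blast
  have aN: "mFi D X Y \<cdot> (Fm D f \<otimes> Fm D g) \<in> homL (Fo D (X \<times>\<^sub>c Y)) (Fo D X' \<odot> Fo D Y')" using N by blast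
  have "mFi D X Y \<cdot> (Fm D f \<otimes> Fm D g) = (mFi D X Y \<cdot> (Fm D f \<otimes> Fm D g)) \<cdot> (mF D X' Y' \<cdot> mFi D X' Y')"
    using aN by (simp add: mF_inv)
  also have "\<dots> = mFi D X Y \<cdot> ((Fm D f \<otimes> Fm D g) \<cdot> mF D X' Y') \<cdot> mFi D X' Y'"
    by (simp add: L_assoc[OF aN mF_hom mFi_hom, symmetric] L_assoc[OF mFi_hom N mF_hom])
  also have "\<dots> = mFi D X Y \<cdot> (mF D X Y \<cdot> Fm D (cprodm (CC D) X Y f g)) \<cdot> mFi D X' Y'"
    by (simp add: mF_nat[OF f g])
  also have "\<dots> = Fm D (cprodm (CC D) X Y f g) \<cdot> mFi D X' Y'"
    using K by (simp add: L_assoc[OF mFi_hom mF_hom K, symmetric] mF_inv)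
  finally show ?thesis .
qed

lemma mFi_I1: "mFi D (trm (CC D)) X = m1 D \<otimes> iL (Fo D X)"
proof -
  have u: "(m1 D \<otimes> iL (Fo D X)) \<cdot> mF D (trm (CC D)) X = iL (Fo D X)" by (rule mF_unit)
  have a: "m1 D \<otimes> iL (Fo D X) \<in> homL (Fo D X) (Fo D (trm (CC D)) \<odot> Fo D X)"
    using tenm_hom[OF m1_hom(1) L_id[of "Fo D X"]] by simp
  have b: "mF D (trm (CC D)) X \<in> homL (Fo D (trm (CC D)) \<odot> Fo D X) (Fo D X)" using mF_hom[of "trm (CC D)" X] by simp
  have c: "mFi D (trm (CC D)) X \<in> homL (Fo D X) (Fo D (trm (CC D)) \<odot> Fo D X)" using mFi_hom[of "trm (CC D)" X] by simp
  have "mFi D (trm (CC D)) X = ((m1 D \<otimes> iL (Fo D X)) \<cdot> mF D (trm (CC D)) X) \<cdot> mFi D (trm (CC D)) X"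
    using c by (simp add: u)
  also have "\<dots> = (m1 D \<otimes> iL (Fo D X)) \<cdot> (mF D (trm (CC D)) X \<cdot> mFi D (trm (CC D)) X)"
    by (rule L_assoc[OF a b c])
  also have "\<dots> = m1 D \<otimes> iL (Fo D X)" using mF_inv(1)[of "trm (CC D)" X] a by simp
  finally show ?thesis .
qed

lemma mFi_I2: "mFi D X (trm (CC D)) = iL (Fo D X) \<otimes> m1 D"
proof -
  have u: "(iL (Fo D X) \<otimes> m1 D) \<cdot> mF D X (trm (CC D)) = iL (Fo D X)" by (rule mF_unit)
  have a: "iL (Fo D X) \<otimes> m1 D \<in> homL (Fo D X) (Fo D X \<odot> Fo D (trm (CC D)))"
    using tenm_hom[OF L_id[of "Fo D X"] m1_hom(1)] by simp
  have b: "mF D X (trm (CC D)) \<in> homL (Fo D X \<odot> Fo D (trm (CC D))) (Fo D X)" using mF_hom[of X "trm (CC D)"] by simp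
  have c: "mFi D X (trm (CC D)) \<in> homL (Fo D X) (Fo D X \<odot> Fo D (trm (CC D)))" using mFi_hom[of X "trm (CC D)"] by simp
  have "mFi D X (trm (CC D)) = ((iL (Fo D X) \<otimes> m1 D) \<cdot> mF D X (trm (CC D))) \<cdot> mFi D X (trm (CC D))"
    using c by (simp add: u)
  also have "\<dots> = (iL (Fo D X) \<otimes> m1 D) \<cdot> (mF D X (trm (CC D)) \<cdot> mFi D X (trm (CC D)))"
    by (rule L_assoc[OF a b c])
  also have "\<dots> = iL (Fo D X) \<otimes> m1 D" using mF_inv(1)[of X "trm (CC D)"] a by simp
  finally show ?thesis .
qed

lemma cc_hom[intro]: "cc D X \<in> homL (Fo D X) (Fo D X \<odot> Fo D X)"
  unfolding cc_def by blast
lemma ww_hom[intro]: "ww D X \<in> homL (Fo D X) (unt (LL D))"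
  unfolding ww_def by blast

lemma counitL: "cc D X \<cdot> (ww D X \<otimes> iL (Fo D X)) = iL (Fo D X)"
proof -
  let ?b = "bang (CC D) X" and ?I = "trm (CC D)"
  have Fd: "Fm D (dl X) \<in> homL (Fo D X) (Fo D (X \<times>\<^sub>c X))" by blast
  have Fb: "Fm D ?b \<in> homL (Fo D X) (Fo D ?I)" by blast
  have t1: "ww D X \<otimes> iL (Fo D X) = (Fm D ?b \<otimes> Fm D (iC X)) \<cdot> (m1i D \<otimes> iL (Fo D X))"
    unfolding ww_def using tenm_cmp[OF Fb m1_hom(2) L_id L_id, of "Fo D X"] by simp
  have A: "Fm D ?b \<otimes> Fm D (iC X) \<in> homL (Fo D X \<odot> Fo D X) (Fo D ?I \<odot> Fo D X)" using Fb by auto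
  have B: "m1i D \<otimes> iL (Fo D X) \<in> homL (Fo D ?I \<odot> Fo D X) (Fo D X)"
    using tenm_hom[OF m1_hom(2) L_id[of "Fo D X"]] by simp
  have "cc D X \<cdot> (ww D X \<otimes> iL (Fo D X)) = Fm D (dl X) \<cdot> (mFi D X X \<cdot> (Fm D ?b \<otimes> Fm D (iC X))) \<cdot> (m1i D \<otimes> iL (Fo D X))"
    unfolding cc_def t1 using L_assoc[OF Fd mFi_hom A] L_assoc[OF L_cmp[OF Fd mFi_hom] A B] by simp
  also have "\<dots> = Fm D (dl X) \<cdot> (Fm D (cprodm (CC D) X X ?b (iC X)) \<cdot> mFi D ?I X) \<cdot> (m1i D \<otimes> iL (Fo D X))"
    using mFi_nat[OF bang_hom C_id] by simp
  also have "\<dots> = Fm D (dl X \<bullet> cprodm (CC D) X X ?b (iC X)) \<cdot> (mFi D ?I X \<cdot> (m1i D \<otimes> iL (Fo D X)))"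
  proof -
    have P: "Fm D (cprodm (CC D) X X ?b (iC X)) \<in> homL (Fo D (X \<times>\<^sub>c X)) (Fo D X)"
      using F_hom[OF cprodm_hom[OF bang_hom C_id, of X X]] by simp
    have M: "mFi D ?I X \<in> homL (Fo D X) (Fo D ?I \<odot> Fo D X)" using mFi_hom[of ?I X] by simp
    show ?thesis using L_assoc[OF Fd P M] L_assoc[OF L_cmp[OF Fd P] M B] F_cmp[OF dl_hom cprodm_hom[OF bang_hom C_id, of X X]]
      by simp
  qed
  also have "\<dots> = iL (Fo D X)"
    using dl_bang1[of X] tenm_cmp[OF m1_hom(1) m1_hom(2) L_id L_id, of "Fo D X"] m1_inv(1) B
    by (simp add: mFi_I1)
  finally show ?thesis .
qed


lemma counitR: "cc D X \<cdot> (iL (Fo D X) \<otimes> ww D X) = iL (Fo D X)"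
proof -
  let ?b = "bang (CC D) X" and ?I = "trm (CC D)"
  have Fd: "Fm D (dl X) \<in> homL (Fo D X) (Fo D (X \<times>\<^sub>c X))" by blast
  have Fb: "Fm D ?b \<in> homL (Fo D X) (Fo D ?I)" by blast
  have t1: "iL (Fo D X) \<otimes> ww D X = (Fm D (iC X) \<otimes> Fm D ?b) \<cdot> (iL (Fo D X) \<otimes> m1i D)"
    unfolding ww_def using tenm_cmp[OF L_id L_id Fb m1_hom(2), of "Fo D X"] by simp
  have A: "Fm D (iC X) \<otimes> Fm D ?b \<in> homL (Fo D X \<odot> Fo D X) (Fo D X \<odot> Fo D ?I)" using Fb by auto
  have B: "iL (Fo D X) \<otimes> m1i D \<in> homL (Fo D X \<odot> Fo D ?I) (Fo D X)"
    using tenm_hom[OF L_id[of "Fo D X"] m1_hom(2)] by simp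
  have "cc D X \<cdot> (iL (Fo D X) \<otimes> ww D X) = Fm D (dl X) \<cdot> (mFi D X X \<cdot> (Fm D (iC X) \<otimes> Fm D ?b)) \<cdot> (iL (Fo D X) \<otimes> m1i D)"
    unfolding cc_def t1 using L_assoc[OF Fd mFi_hom A] L_assoc[OF L_cmp[OF Fd mFi_hom] A B] by simp
  also have "\<dots> = Fm D (dl X) \<cdot> (Fm D (cprodm (CC D) X X (iC X) ?b) \<cdot> mFi D X ?I) \<cdot> (iL (Fo D X) \<otimes> m1i D)"
    using mFi_nat[OF C_id bang_hom] by simp
  also have "\<dots> = Fm D (dl X \<bullet> cprodm (CC D) X X (iC X) ?b) \<cdot> (mFi D X ?I \<cdot> (iL (Fo D X) \<otimes> m1i D))"
  proof -
    have P: "Fm D (cprodm (CC D) X X (iC X) ?b) \<in> homL (Fo D (X \<times>\<^sub>c X)) (Fo D X)"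
      using F_hom[OF cprodm_hom[OF C_id bang_hom, of X X]] by simp
    have M: "mFi D X ?I \<in> homL (Fo D X) (Fo D X \<odot> Fo D ?I)" using mFi_hom[of X ?I] by simp
    show ?thesis using L_assoc[OF Fd P M] L_assoc[OF L_cmp[OF Fd P] M B] F_cmp[OF dl_hom cprodm_hom[OF C_id bang_hom, of X X]]
      by simp
  qed
  also have "\<dots> = iL (Fo D X)"
    using dl_bang2[of X] tenm_cmp[OF L_id L_id m1_hom(1) m1_hom(2), of "Fo D X"] m1_inv(1) B
    by (simp add: mFi_I2)
  finally show ?thesis .
qed

lemma mFi_assoc: "mFi D (X \<times>\<^sub>c Y) Z \<cdot> (mFi D X Y \<otimes> iL (Fo D Z)) = mFi D X (Y \<times>\<^sub>c Z) \<cdot> (iL (Fo D X) \<otimes> mFi D Y Z)"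
proof -
  let ?FX = "Fo D X" and ?FY = "Fo D Y" and ?FZ = "Fo D Z" and ?P = "Fo D (X \<times>\<^sub>c (Y \<times>\<^sub>c Z))"
  let ?M = "(mF D X Y \<otimes> iL ?FZ) \<cdot> mF D (X \<times>\<^sub>c Y) Z"
  let ?a = "mFi D (X \<times>\<^sub>c Y) Z \<cdot> (mFi D X Y \<otimes> iL (Fo D Z))"
  let ?b = "mFi D X (Y \<times>\<^sub>c Z) \<cdot> (iL (Fo D X) \<otimes> mFi D Y Z)"
  have h1: "mF D X Y \<otimes> iL ?FZ \<in> homL (?FX \<odot> ?FY \<odot> ?FZ) (Fo D (X \<times>\<^sub>c Y) \<odot> ?FZ)"
    using tenm_hom[OF mF_hom L_id] by simp
  have h1i: "mFi D X Y \<otimes> iL ?FZ \<in> homL (Fo D (X \<times>\<^sub>c Y) \<odot> ?FZ) (?FX \<odot> ?FY \<odot> ?FZ)"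
    using tenm_hom[OF mFi_hom L_id] by simp
  have h2: "mF D (X \<times>\<^sub>c Y) Z \<in> homL (Fo D (X \<times>\<^sub>c Y) \<odot> ?FZ) ?P" using mF_hom[of "X \<times>\<^sub>c Y" Z] by simp
  have h2i: "mFi D (X \<times>\<^sub>c Y) Z \<in> homL ?P (Fo D (X \<times>\<^sub>c Y) \<odot> ?FZ)" using mFi_hom[of "X \<times>\<^sub>c Y" Z] by simp
  have k1: "iL ?FX \<otimes> mF D Y Z \<in> homL (?FX \<odot> ?FY \<odot> ?FZ) (?FX \<odot> Fo D (Y \<times>\<^sub>c Z))"
    using tenm_hom[OF L_id mF_hom] by simp
  have k1i: "iL ?FX \<otimes> mFi D Y Z \<in> homL (?FX \<odot> Fo D (Y \<times>\<^sub>c Z)) (?FX \<odot> ?FY \<odot> ?FZ)"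
    using tenm_hom[OF L_id mFi_hom] by simp
  have k2: "mF D X (Y \<times>\<^sub>c Z) \<in> homL (?FX \<odot> Fo D (Y \<times>\<^sub>c Z)) ?P" by blast
  have k2i: "mFi D X (Y \<times>\<^sub>c Z) \<in> homL ?P (?FX \<odot> Fo D (Y \<times>\<^sub>c Z))" by blast
  have M: "?M = (iL ?FX \<otimes> mF D Y Z) \<cdot> mF D X (Y \<times>\<^sub>c Z)" by (rule mF_assoc)
  have Mh: "?M \<in> homL (?FX \<odot> ?FY \<odot> ?FZ) ?P" using h1 h2 by blast
  have a: "?a \<in> homL ?P (?FX \<odot> ?FY \<odot> ?FZ)" using h2i h1i by blast
  have b: "?b \<in> homL ?P (?FX \<odot> ?FY \<odot> ?FZ)" using k2i k1i by blast
  have t1: "(mFi D X Y \<otimes> iL ?FZ) \<cdot> (mF D X Y \<otimes> iL ?FZ) = iL (Fo D (X \<times>\<^sub>c Y) \<odot> ?FZ)"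
    using tenm_cmp[OF mFi_hom mF_hom L_id L_id, of X Y ?FZ] by (simp add: mF_inv)
  have t2: "(iL ?FX \<otimes> mF D Y Z) \<cdot> (iL ?FX \<otimes> mFi D Y Z) = iL (?FX \<odot> ?FY \<odot> ?FZ)"
    using tenm_cmp[OF L_id L_id mF_hom mFi_hom, of ?FX Y Z] by (simp add: mF_inv)
  have aM: "?a \<cdot> ?M = iL ?P"
  proof -
    have "?a \<cdot> ?M = mFi D (X \<times>\<^sub>c Y) Z \<cdot> (((mFi D X Y \<otimes> iL ?FZ) \<cdot> (mF D X Y \<otimes> iL ?FZ)) \<cdot> mF D (X \<times>\<^sub>c Y) Z)"
      using L_assoc[OF h2i h1i Mh] L_assoc[OF h1i h1 h2] by simp
    also have "\<dots> = iL ?P" using t1 h2 mF_inv(2)[of "X \<times>\<^sub>c Y" Z] by simp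
    finally show ?thesis .
  qed
  have Mb: "?M \<cdot> ?b = iL (?FX \<odot> ?FY \<odot> ?FZ)"
  proof -
    have "?M \<cdot> ?b = (iL ?FX \<otimes> mF D Y Z) \<cdot> ((mF D X (Y \<times>\<^sub>c Z) \<cdot> mFi D X (Y \<times>\<^sub>c Z)) \<cdot> (iL (Fo D X) \<otimes> mFi D Y Z))"
      unfolding M using L_assoc[OF k1 k2 b] L_assoc[OF k2 k2i k1i] by simp
    also have "\<dots> = iL (?FX \<odot> ?FY \<odot> ?FZ)" using t2 k1i mF_inv(1)[of X "Y \<times>\<^sub>c Z"] by simp
    finally show ?thesis .
  qed
  have "?a = ?a \<cdot> (?M \<cdot> ?b)" using a by (simp add: Mb)
  also have "\<dots> = (?a \<cdot> ?M) \<cdot> ?b" using L_assoc[OF a Mh b] by simp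
  also have "\<dots> = ?b" using aM b by simp
  finally show ?thesis .
qed


lemma dlnat: assumes f: "f \<in> homC X Y" and g: "g \<in> homC X Z"
  shows "cc D X \<cdot> (Fm D f \<otimes> Fm D g) = Fm D (dl X \<bullet> cprodm (CC D) X X f g) \<cdot> mFi D Y Z"
proof -
  have Fd: "Fm D (dl X) \<in> homL (Fo D X) (Fo D (X \<times>\<^sub>c X))" by blast
  have N: "Fm D f \<otimes> Fm D g \<in> homL (Fo D X \<odot> Fo D X) (Fo D Y \<odot> Fo D Z)" using f g by blast
  have P: "Fm D (cprodm (CC D) X X f g) \<in> homL (Fo D (X \<times>\<^sub>c X)) (Fo D (Y \<times>\<^sub>c Z))" using f g by blast
  have "cc D X \<cdot> (Fm D f \<otimes> Fm D g) = Fm D (dl X) \<cdot> (mFi D X X \<cdot> (Fm D f \<otimes> Fm D g))"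
    unfolding cc_def by (rule L_assoc[OF Fd mFi_hom N])
  also have "\<dots> = (Fm D (dl X) \<cdot> Fm D (cprodm (CC D) X X f g)) \<cdot> mFi D Y Z"
    unfolding mFi_nat[OF f g] by (rule L_assoc[OF Fd P mFi_hom, symmetric])
  also have "\<dots> = Fm D (dl X \<bullet> cprodm (CC D) X X f g) \<cdot> mFi D Y Z"
    using F_cmp[OF dl_hom cprodm_hom[OF f g]] by simp
  finally show ?thesis .
qed

lemma coassoc: "cc D X \<cdot> (cc D X \<otimes> iL (Fo D X)) = cc D X \<cdot> (iL (Fo D X) \<otimes> cc D X)"
proof -
  let ?FX = "Fo D X"
  have Fd: "Fm D (dl X) \<in> homL (Fo D X) (Fo D (X \<times>\<^sub>c X))" by blast
  have e1: "cc D X \<otimes> iL ?FX = (Fm D (dl X) \<otimes> Fm D (iC X)) \<cdot> (mFi D X X \<otimes> iL ?FX)"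
    unfolding cc_def using tenm_cmp[OF Fd mFi_hom L_id L_id] by simp
  have e2: "iL ?FX \<otimes> cc D X = (Fm D (iC X) \<otimes> Fm D (dl X)) \<cdot> (iL ?FX \<otimes> mFi D X X)"
    unfolding cc_def using tenm_cmp[OF L_id L_id Fd mFi_hom] by simp
  have A1: "Fm D (dl X) \<otimes> Fm D (iC X) \<in> homL (?FX \<odot> ?FX) (Fo D (X \<times>\<^sub>c X) \<odot> ?FX)" by blast
  have B1: "mFi D X X \<otimes> iL ?FX \<in> homL (Fo D (X \<times>\<^sub>c X) \<odot> ?FX) (?FX \<odot> ?FX \<odot> ?FX)"
    using tenm_hom[OF mFi_hom L_id] by simp
  have A2: "Fm D (iC X) \<otimes> Fm D (dl X) \<in> homL (?FX \<odot> ?FX) (?FX \<odot> Fo D (X \<times>\<^sub>c X))" by blast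
  have B2: "iL ?FX \<otimes> mFi D X X \<in> homL (?FX \<odot> Fo D (X \<times>\<^sub>c X)) (?FX \<odot> ?FX \<odot> ?FX)"
    using tenm_hom[OF L_id mFi_hom] by simp
  have C1: "Fm D (dl X \<bullet> cprodm (CC D) X X (dl X) (iC X)) \<in> homL ?FX (Fo D (X \<times>\<^sub>c (X \<times>\<^sub>c X)))"
    using F_hom[OF C_cmp[OF dl_hom cprodm_hom[OF dl_hom C_id]]] by simp
  have m1: "mFi D (X \<times>\<^sub>c X) X \<in> homL (Fo D (X \<times>\<^sub>c (X \<times>\<^sub>c X))) (Fo D (X \<times>\<^sub>c X) \<odot> ?FX)"
    using mFi_hom[of "X \<times>\<^sub>c X" X] by simp
  have C2: "Fm D (dl X \<bullet> cprodm (CC D) X X (iC X) (dl X)) \<in> homL ?FX (Fo D (X \<times>\<^sub>c (X \<times>\<^sub>c X)))"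
    using F_hom[OF C_cmp[OF dl_hom cprodm_hom[OF C_id dl_hom]]] by simp
  have m2: "mFi D X (X \<times>\<^sub>c X) \<in> homL (Fo D (X \<times>\<^sub>c (X \<times>\<^sub>c X))) (?FX \<odot> Fo D (X \<times>\<^sub>c X))" by blast
  have "cc D X \<cdot> (cc D X \<otimes> iL ?FX) = (cc D X \<cdot> (Fm D (dl X) \<otimes> Fm D (iC X))) \<cdot> (mFi D X X \<otimes> iL ?FX)"
    unfolding e1 by (rule L_assoc[OF cc_hom A1 B1, symmetric])
  also have "\<dots> = Fm D (dl X \<bullet> cprodm (CC D) X X (dl X) (iC X)) \<cdot> (mFi D (X \<times>\<^sub>c X) X \<cdot> (mFi D X X \<otimes> iL ?FX))"
    unfolding dlnat[OF dl_hom C_id] by (rule L_assoc[OF C1 m1 B1])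
  also have "\<dots> = Fm D (dl X \<bullet> cprodm (CC D) X X (iC X) (dl X)) \<cdot> (mFi D X (X \<times>\<^sub>c X) \<cdot> (iL ?FX \<otimes> mFi D X X))"
    by (simp add: dl_coassoc mFi_assoc)
  also have "\<dots> = (cc D X \<cdot> (Fm D (iC X) \<otimes> Fm D (dl X))) \<cdot> (iL ?FX \<otimes> mFi D X X)"
    unfolding dlnat[OF C_id dl_hom] by (rule L_assoc[OF C2 m2 B2, symmetric])
  also have "\<dots> = cc D X \<cdot> (iL ?FX \<otimes> cc D X)"
    unfolding e2 by (rule L_assoc[OF cc_hom A2 B2])
  finally show ?thesis .
qed


lemma fib_lunit: assumes v: "v \<in> homL (Fo D X \<odot> A) B"
  shows "(cc D X \<otimes> iL A) \<cdot> (iL (Fo D X) \<otimes> (ww D X \<otimes> iL A)) \<cdot> v = v"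
proof -
  have a: "cc D X \<otimes> iL A \<in> homL (Fo D X \<odot> A) (Fo D X \<odot> Fo D X \<odot> A)"
    using tenm_hom[OF cc_hom L_id, of X A] by simp
  have e: "iL (Fo D X) \<otimes> (ww D X \<otimes> iL A) = (iL (Fo D X) \<otimes> ww D X) \<otimes> iL A"
    by (rule tenm_assoc[OF L_id ww_hom L_id, symmetric])
  have b: "(iL (Fo D X) \<otimes> ww D X) \<otimes> iL A \<in> homL (Fo D X \<odot> Fo D X \<odot> A) (Fo D X \<odot> A)"
    using tenm_hom[OF tenm_hom[OF L_id ww_hom] L_id, of "Fo D X" X A] by simp
  have "(cc D X \<otimes> iL A) \<cdot> ((iL (Fo D X) \<otimes> ww D X) \<otimes> iL A) = (cc D X \<cdot> (iL (Fo D X) \<otimes> ww D X)) \<otimes> (iL A \<cdot> iL A)"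
    using tenm_cmp[OF cc_hom _ L_id L_id, of "iL (Fo D X) \<otimes> ww D X" X "Fo D X" A] tenm_hom[OF L_id ww_hom, of "Fo D X" X]
    by simp
  also have "\<dots> = iL (Fo D X \<odot> A)" by (simp add: counitR)
  finally have c: "(cc D X \<otimes> iL A) \<cdot> ((iL (Fo D X) \<otimes> ww D X) \<otimes> iL A) = iL (Fo D X \<odot> A)" .
  show ?thesis unfolding e using c v by simp
qed

lemma fib_runit: assumes v: "v \<in> homL (Fo D X \<odot> A) B"
  shows "(cc D X \<otimes> iL A) \<cdot> (iL (Fo D X) \<otimes> v) \<cdot> (ww D X \<otimes> iL B) = v"
proof -
  have w: "ww D X \<in> homL (Fo D X) (unt (LL D))" by (rule ww_hom)
  have a: "cc D X \<otimes> iL A \<in> homL (Fo D X \<odot> A) (Fo D X \<odot> Fo D X \<odot> A)"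
    using tenm_hom[OF cc_hom L_id, of X A] by simp
  have iv: "iL (Fo D X) \<otimes> v \<in> homL (Fo D X \<odot> Fo D X \<odot> A) (Fo D X \<odot> B)"
    using tenm_hom[OF L_id v, of "Fo D X"] by simp
  have wB: "ww D X \<otimes> iL B \<in> homL (Fo D X \<odot> B) B"
    using tenm_hom[OF ww_hom L_id, of X B] by simp
  have wXA: "(ww D X \<otimes> iL (Fo D X)) \<otimes> iL A \<in> homL (Fo D X \<odot> Fo D X \<odot> A) (Fo D X \<odot> A)"
    using tenm_hom[OF tenm_hom[OF ww_hom L_id] L_id, of X "Fo D X" A] by simp
  have "(iL (Fo D X) \<otimes> v) \<cdot> (ww D X \<otimes> iL B) = ww D X \<otimes> v"
    using tenm_cmp[OF L_id w v L_id] w v by simp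
  also have "\<dots> = (ww D X \<otimes> iL (Fo D X \<odot> A)) \<cdot> (iL (unt (LL D)) \<otimes> v)"
    using tenm_cmp[OF w L_id L_id v] w v by simp
  also have "\<dots> = ((ww D X \<otimes> iL (Fo D X)) \<otimes> iL A) \<cdot> v"
    using tenm_unt(1)[OF v] tenm_assoc[OF w L_id L_id] by simp
  finally have e: "(iL (Fo D X) \<otimes> v) \<cdot> (ww D X \<otimes> iL B) = ((ww D X \<otimes> iL (Fo D X)) \<otimes> iL A) \<cdot> v" .
  have c: "(cc D X \<otimes> iL A) \<cdot> ((ww D X \<otimes> iL (Fo D X)) \<otimes> iL A) = iL (Fo D X \<odot> A)"
    using tenm_cmp[OF cc_hom _ L_id L_id, of "ww D X \<otimes> iL (Fo D X)" X "Fo D X" A] tenm_hom[OF ww_hom L_id, of X "Fo D X"]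
    by (simp add: counitL)
  have "(cc D X \<otimes> iL A) \<cdot> (iL (Fo D X) \<otimes> v) \<cdot> (ww D X \<otimes> iL B) = (cc D X \<otimes> iL A) \<cdot> ((iL (Fo D X) \<otimes> v) \<cdot> (ww D X \<otimes> iL B))"
    by (rule L_assoc[OF a iv wB])
  also have "\<dots> = ((cc D X \<otimes> iL A) \<cdot> ((ww D X \<otimes> iL (Fo D X)) \<otimes> iL A)) \<cdot> v"
    unfolding e by (rule L_assoc[OF a wXA v, symmetric])
  also have "\<dots> = v" using c v by simp
  finally show ?thesis .
qed


lemma fib_assoc: assumes v1: "v1 \<in> homL (Fo D X \<odot> A) B" and v2: "v2 \<in> homL (Fo D X \<odot> B) C"
   and v3: "v3 \<in> homL (Fo D X \<odot> C) E"
  shows "(cc D X \<otimes> iL A) \<cdot> (iL (Fo D X) \<otimes> ((cc D X \<otimes> iL A) \<cdot> (iL (Fo D X) \<otimes> v1) \<cdot> v2)) \<cdot> v3 =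
         (cc D X \<otimes> iL A) \<cdot> (iL (Fo D X) \<otimes> v1) \<cdot> ((cc D X \<otimes> iL B) \<cdot> (iL (Fo D X) \<otimes> v2) \<cdot> v3)"
proof -
  let ?X = "Fo D X" and ?iX = "iL (Fo D X)" and ?cA = "cc D X \<otimes> iL A" and ?cB = "cc D X \<otimes> iL B"
  let ?t1 = "iL (Fo D X) \<otimes> v1" and ?t2 = "iL (Fo D X) \<otimes> v2"
  let ?K = "(cc D X \<otimes> iL ?X) \<otimes> iL A"
  have c: "cc D X \<in> homL ?X (?X \<odot> ?X)" by (rule cc_hom)
  have cA: "?cA \<in> homL (?X \<odot> A) (?X \<odot> ?X \<odot> A)" using tenm_hom[OF c L_id] by simp
  have cB: "?cB \<in> homL (?X \<odot> B) (?X \<odot> ?X \<odot> B)" using tenm_hom[OF c L_id] by simp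
  have t1: "?t1 \<in> homL (?X \<odot> ?X \<odot> A) (?X \<odot> B)" using tenm_hom[OF L_id v1] by simp
  have t2: "?t2 \<in> homL (?X \<odot> ?X \<odot> B) (?X \<odot> C)" using tenm_hom[OF L_id v2] by simp
  have ca1: "?cA \<cdot> ?t1 \<in> homL (?X \<odot> A) (?X \<odot> B)" using cA t1 by blast
  have f12: "?cA \<cdot> ?t1 \<cdot> v2 \<in> homL (?X \<odot> A) C" using ca1 v2 by blast
  have iXcA: "?iX \<otimes> ?cA \<in> homL (?X \<odot> ?X \<odot> A) (?X \<odot> ?X \<odot> ?X \<odot> A)" using tenm_hom[OF L_id cA] by simp
  have iXt1: "?iX \<otimes> ?t1 \<in> homL (?X \<odot> ?X \<odot> ?X \<odot> A) (?X \<odot> ?X \<odot> B)" using tenm_hom[OF L_id t1] by simp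
  have iXca1: "?iX \<otimes> (?cA \<cdot> ?t1) \<in> homL (?X \<odot> ?X \<odot> A) (?X \<odot> ?X \<odot> B)" using tenm_hom[OF L_id ca1] by simp
  have K: "?K \<in> homL (?X \<odot> ?X \<odot> A) (?X \<odot> ?X \<odot> ?X \<odot> A)" using tenm_hom[OF tenm_hom[OF c L_id] L_id] by simp
  have iXc: "?iX \<otimes> cc D X \<in> homL (?X \<odot> ?X) (?X \<odot> ?X \<odot> ?X)" using tenm_hom[OF L_id c] by simp
  have cX: "cc D X \<otimes> ?iX \<in> homL (?X \<odot> ?X) (?X \<odot> ?X \<odot> ?X)" using tenm_hom[OF c L_id] by simp
  have step1: "?iX \<otimes> (?cA \<cdot> ?t1 \<cdot> v2) = ((?iX \<otimes> ?cA) \<cdot> (?iX \<otimes> ?t1)) \<cdot> ?t2"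
    using tenm_cmp[OF L_id L_id ca1 v2] tenm_cmp[OF L_id L_id cA t1] by simp
  have k1: "?cA \<cdot> (?iX \<otimes> ?cA) = ?cA \<cdot> ?K"
  proof -
    have "?iX \<otimes> ?cA = (?iX \<otimes> cc D X) \<otimes> iL A" by (rule tenm_assoc[OF L_id c L_id, symmetric])
    then have "?cA \<cdot> (?iX \<otimes> ?cA) = (cc D X \<cdot> (?iX \<otimes> cc D X)) \<otimes> (iL A \<cdot> iL A)"
      using tenm_cmp[OF c iXc L_id L_id] by simp
    also have "\<dots> = (cc D X \<cdot> (cc D X \<otimes> ?iX)) \<otimes> (iL A \<cdot> iL A)" by (simp add: coassoc)
    also have "\<dots> = ?cA \<cdot> ?K" by (rule tenm_cmp[OF c cX L_id L_id])
    finally show ?thesis .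
  qed
  have k2: "?t1 \<cdot> ?cB = ?K \<cdot> (?iX \<otimes> ?t1)"
  proof -
    have "?t1 \<cdot> ?cB = (?iX \<cdot> cc D X) \<otimes> (v1 \<cdot> iL B)" by (rule tenm_cmp[OF L_id c v1 L_id, symmetric])
    also have "\<dots> = (cc D X \<cdot> iL (?X \<odot> ?X)) \<otimes> (iL (?X \<odot> A) \<cdot> v1)" using c v1 by simp
    also have "\<dots> = (cc D X \<otimes> iL (?X \<odot> A)) \<cdot> (iL (?X \<odot> ?X) \<otimes> v1)" by (rule tenm_cmp[OF c L_id L_id v1])
    also have "\<dots> = ?K \<cdot> (?iX \<otimes> ?t1)"
      using tenm_assoc[OF c L_id[of ?X] L_id[of A]] tenm_assoc[OF L_id[of ?X] L_id[of ?X] v1] by simp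
    finally show ?thesis .
  qed
  have key: "?cA \<cdot> (?iX \<otimes> ?cA) \<cdot> (?iX \<otimes> ?t1) = ?cA \<cdot> ?t1 \<cdot> ?cB"
    unfolding k1 using L_assoc[OF cA K iXt1] k2 L_assoc[OF cA t1 cB] by simp
  have "(cc D X \<otimes> iL A) \<cdot> (iL (Fo D X) \<otimes> ((cc D X \<otimes> iL A) \<cdot> (iL (Fo D X) \<otimes> v1) \<cdot> v2)) \<cdot> v3
      = ?cA \<cdot> ((?iX \<otimes> ?cA) \<cdot> (?iX \<otimes> ?t1) \<cdot> ?t2) \<cdot> v3" unfolding step1 ..
  also have "\<dots> = ?cA \<cdot> (?iX \<otimes> ?cA) \<cdot> (?iX \<otimes> ?t1) \<cdot> ?t2 \<cdot> v3"
    using L_assoc[OF cA L_cmp[OF iXcA iXt1] t2] L_assoc[OF cA iXcA iXt1] by simp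
  also have "\<dots> = ?cA \<cdot> ?t1 \<cdot> ?cB \<cdot> ?t2 \<cdot> v3" unfolding key ..
  also have "\<dots> = ?cA \<cdot> ?t1 \<cdot> (?cB \<cdot> ?t2 \<cdot> v3)"
    using L_assoc[OF ca1 cB t2] L_assoc[OF ca1 L_cmp[OF cB t2] v3] L_assoc[OF cB t2 v3] by simp
  finally show ?thesis .
qed


lemma fib_inv_unique: assumes w: "w \<in> homL (Fo D X \<odot> A) B"
  and v1: "v1 \<in> homL (Fo D X \<odot> B) A" and v2: "v2 \<in> homL (Fo D X \<odot> B) A"
  and h1: "(cc D X \<otimes> iL A) \<cdot> (iL (Fo D X) \<otimes> w) \<cdot> v2 = ww D X \<otimes> iL A"
  and h2: "(cc D X \<otimes> iL B) \<cdot> (iL (Fo D X) \<otimes> v1) \<cdot> w = ww D X \<otimes> iL B"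
  shows "v1 = v2"
proof -
  have "v1 = (cc D X \<otimes> iL B) \<cdot> (iL (Fo D X) \<otimes> v1) \<cdot> (ww D X \<otimes> iL A)" using fib_runit[OF v1] by simp
  also have "\<dots> = (cc D X \<otimes> iL B) \<cdot> (iL (Fo D X) \<otimes> v1) \<cdot> ((cc D X \<otimes> iL A) \<cdot> (iL (Fo D X) \<otimes> w) \<cdot> v2)"
    by (simp add: h1)
  also have "\<dots> = (cc D X \<otimes> iL B) \<cdot> (iL (Fo D X) \<otimes> ((cc D X \<otimes> iL B) \<cdot> (iL (Fo D X) \<otimes> v1) \<cdot> w)) \<cdot> v2"
    by (rule fib_assoc[OF v1 w v2, symmetric])
  also have "\<dots> = v2" unfolding h2 by (rule fib_lunit[OF v2])
  finally show ?thesis .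
qed

lemma fib_post: assumes v: "v \<in> homL (Fo D X \<odot> A) B" and p: "p \<in> homL B E"
  shows "(cc D X \<otimes> iL A) \<cdot> (iL (Fo D X) \<otimes> v) \<cdot> (ww D X \<otimes> p) = v \<cdot> p"
proof -
  have w: "ww D X \<in> homL (Fo D X) (unt (LL D))" by (rule ww_hom)
  have a: "cc D X \<otimes> iL A \<in> homL (Fo D X \<odot> A) (Fo D X \<odot> Fo D X \<odot> A)"
    using tenm_hom[OF cc_hom L_id] by simp
  have iv: "iL (Fo D X) \<otimes> v \<in> homL (Fo D X \<odot> Fo D X \<odot> A) (Fo D X \<odot> B)"
    using tenm_hom[OF L_id v] by simp
  have wB: "ww D X \<otimes> iL B \<in> homL (Fo D X \<odot> B) B"
    using tenm_hom[OF w L_id] by simp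
  have e: "ww D X \<otimes> p = (ww D X \<otimes> iL B) \<cdot> p"
    using tenm_cmp[OF w L_id L_id p] tenm_unt(1)[OF p] w p by simp
  have "(cc D X \<otimes> iL A) \<cdot> (iL (Fo D X) \<otimes> v) \<cdot> (ww D X \<otimes> p) = ((cc D X \<otimes> iL A) \<cdot> (iL (Fo D X) \<otimes> v) \<cdot> (ww D X \<otimes> iL B)) \<cdot> p"
    unfolding e by (rule L_assoc[OF L_cmp[OF a iv] wB p, symmetric])
  also have "\<dots> = v \<cdot> p" by (simp add: fib_runit[OF v])
  finally show ?thesis .
qed

lemma LScomp_fib: "LScomp D (X, A) (iC X, v1) (g, v2) = (iC X \<bullet> g, (cc D X \<otimes> iL A) \<cdot> (iL (Fo D X) \<otimes> v1) \<cdot> v2)"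
  unfolding LScomp_def by simp

lemma LSid_eq: "LSid D (X, A) = (iC X, ww D X \<otimes> iL A)" unfolding LSid_def by simp

lemma LSinv_fib: assumes w: "w \<in> homL (Fo D P \<odot> A) B"
  and ex: "\<exists>k. k \<in> LShom D (P, B) (P, A) \<and> LScomp D (P, A) (iC P, w) k = LSid D (P, A) \<and> LScomp D (P, B) k (iC P, w) = LSid D (P, B)"
  shows "fst (LSinv D (P, A) (P, B) (iC P, w)) = iC P \<and> snd (LSinv D (P, A) (P, B) (iC P, w)) \<in> homL (Fo D P \<odot> B) A"
proof -
  let ?Q = "\<lambda>k. k \<in> LShom D (P, B) (P, A) \<and> LScomp D (P, A) (iC P, w) k = LSid D (P, A) \<and> LScomp D (P, B) k (iC P, w) = LSid D (P, B)"
  have char: "fst k = iC P \<and> snd k \<in> homL (Fo D P \<odot> B) A \<and>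
      (cc D P \<otimes> iL A) \<cdot> (iL (Fo D P) \<otimes> w) \<cdot> snd k = ww D P \<otimes> iL A \<and>
      (cc D P \<otimes> iL B) \<cdot> (iL (Fo D P) \<otimes> snd k) \<cdot> w = ww D P \<otimes> iL B" if Q: "?Q k" for k
  proof -
    obtain g v where k: "k = (g, v)" by (cases k)
    have g: "g \<in> homC P P" and v: "v \<in> homL (Fo D P \<odot> B) A" using Q unfolding k LShom_def by auto
    have c1: "LScomp D (P, A) (iC P, w) k = (g, (cc D P \<otimes> iL A) \<cdot> (iL (Fo D P) \<otimes> w) \<cdot> v)"
      unfolding k LScomp_fib using g by simp
    have gi: "g = iC P" and e1: "(cc D P \<otimes> iL A) \<cdot> (iL (Fo D P) \<otimes> w) \<cdot> v = ww D P \<otimes> iL A"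
      using Q c1 unfolding LSid_eq by auto
    have c2: "LScomp D (P, B) k (iC P, w) = (iC P, (cc D P \<otimes> iL B) \<cdot> (iL (Fo D P) \<otimes> v) \<cdot> w)"
      unfolding k gi LScomp_fib by simp
    have e2: "(cc D P \<otimes> iL B) \<cdot> (iL (Fo D P) \<otimes> v) \<cdot> w = ww D P \<otimes> iL B"
      using Q c2 unfolding LSid_eq by auto
    show ?thesis using gi v e1 e2 unfolding k by simp
  qed
  have uq: "\<exists>!k. ?Q k"
  proof -
    obtain k0 where k0: "?Q k0" using ex by blast
    have "k = k0" if "?Q k" for k
    proof -
      have a: "fst k = fst k0" using char[OF that] char[OF k0] by simp
      have b: "snd k = snd k0"
        using fib_inv_unique[OF w _ _ _ _] char[OF that] char[OF k0] by blast
      show ?thesis using a b by (simp add: prod_eq_iff)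
    qed
    then show ?thesis using k0 by blast
  qed
  have "?Q (LSinv D (P, A) (P, B) (iC P, w))" unfolding LSinv_def by (rule theI'[OF uq])
  then show ?thesis using char by blast
qed


lemma bpr_hom: "bpr1 (LL D) A B \<in> homL (bip (LL D) A B) A" "bpr2 (LL D) A B \<in> homL (bip (LL D) A B) B"
  by (rule bipU[THEN conjunct2, THEN conjunct1, rule_format, THEN conjunct1], rule bipU[THEN conjunct2, THEN conjunct1, rule_format, THEN conjunct2, THEN conjunct1])
lemma bin2_hom: "bin2 (LL D) A B \<in> homL B (bip (LL D) A B)"
  by (rule bipU[THEN conjunct2, THEN conjunct1, rule_format, THEN conjunct2, THEN conjunct2, THEN conjunct2])
lemma bip_pair: "f \<in> homL C A \<Longrightarrow> g \<in> homL C B \<Longrightarrow>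
   \<exists>!h. h \<in> homL C (bip (LL D) A B) \<and> h \<cdot> bpr1 (LL D) A B = f \<and> h \<cdot> bpr2 (LL D) A B = g"
  by (rule bipU[THEN conjunct2, THEN conjunct2, THEN conjunct1, rule_format])

lemma C_idl_pr[simp]: "iC (X \<times>\<^sub>c Y) \<bullet> pr1 (CC D) X Y = pr1 (CC D) X Y" "iC (X \<times>\<^sub>c Y) \<bullet> pr2 (CC D) X Y = pr2 (CC D) X Y"
  by (rule C_idl[OF pr1_hom], rule C_idl[OF pr2_hom])

lemma tup_prid: "tup (CC D) (pr1 (CC D) X Y) (pr2 (CC D) X Y) = iC (X \<times>\<^sub>c Y)"
  by (rule tup_uniq[symmetric]) auto

lemma phi_fib: "fst (phi D X Y) = iC (X \<times>\<^sub>c Y) \<and>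
   snd (phi D X Y) \<in> homL (Fo D (X \<times>\<^sub>c Y) \<odot> lam D (X \<times>\<^sub>c Y)) (bip (LL D) (lam D X) (lam D Y))"
proof -
  let ?P = "X \<times>\<^sub>c Y" and ?lX = "lam D X" and ?lY = "lam D Y"
  let ?B = "bip (LL D) (lam D X) (lam D Y)" and ?lP = "lam D (X \<times>\<^sub>c Y)"
  let ?p1 = "pr1 (CC D) X Y" and ?p2 = "pr2 (CC D) X Y"
  let ?Q = "\<lambda>h. h \<in> LShom D (Tob D ?P) (?P, ?B) \<and>
      LScomp D (Tob D ?P) h (LSproj1 D X Y ?lX ?lY) = Tmor D ?p1 \<and>
      LScomp D (Tob D ?P) h (LSproj2 D X Y ?lX ?lY) = Tmor D ?p2"
  have T1: "Tv D ?p1 \<in> homL (Fo D ?P \<odot> ?lP) ?lX" using T_hom[OF pr1_hom] by simp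
  have T2: "Tv D ?p2 \<in> homL (Fo D ?P \<odot> ?lP) ?lY" using T_hom[OF pr2_hom] by simp
  have char: "fst h = iC ?P \<and> snd h \<in> homL (Fo D ?P \<odot> ?lP) ?B \<and>
      snd h \<cdot> bpr1 (LL D) ?lX ?lY = Tv D ?p1 \<and> snd h \<cdot> bpr2 (LL D) ?lX ?lY = Tv D ?p2" if Q: "?Q h" for h
  proof -
    obtain g w where h: "h = (g, w)" by (cases h)
    have g: "g \<in> homC ?P ?P" and w: "w \<in> homL (Fo D ?P \<odot> ?lP) ?B" using Q unfolding h LShom_def Tob_def by auto
    have e1: "g \<bullet> ?p1 = ?p1" and e1': "(cc D ?P \<otimes> iL ?lP) \<cdot> (Fm D g \<otimes> w) \<cdot> (ww D ?P \<otimes> bpr1 (LL D) ?lX ?lY) = Tv D ?p1"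
      using Q unfolding h LScomp_def LSproj1_def Tmor_def Tob_def by auto
    have e2: "g \<bullet> ?p2 = ?p2" and e2': "(cc D ?P \<otimes> iL ?lP) \<cdot> (Fm D g \<otimes> w) \<cdot> (ww D ?P \<otimes> bpr2 (LL D) ?lX ?lY) = Tv D ?p2"
      using Q unfolding h LScomp_def LSproj2_def Tmor_def Tob_def by auto
    have gi: "g = iC ?P" using tup_uniq[OF pr1_hom pr2_hom g e1 e2] tup_prid by simp
    have "w \<cdot> bpr1 (LL D) ?lX ?lY = Tv D ?p1" using e1' fib_post[OF w bpr_hom(1)] unfolding gi by simp
    moreover have "w \<cdot> bpr2 (LL D) ?lX ?lY = Tv D ?p2" using e2' fib_post[OF w bpr_hom(2)] unfolding gi by simp
    ultimately show ?thesis using gi w h by simp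
  qed
  obtain w0 where w0: "w0 \<in> homL (Fo D ?P \<odot> ?lP) ?B" "w0 \<cdot> bpr1 (LL D) ?lX ?lY = Tv D ?p1"
      "w0 \<cdot> bpr2 (LL D) ?lX ?lY = Tv D ?p2"
    using bip_pair[OF T1 T2] by blast
  have Q0: "?Q (iC ?P, w0)"
  proof -
    have "(iC ?P, w0) \<in> LShom D (Tob D ?P) (?P, ?B)" using w0(1) unfolding LShom_def Tob_def by simp
    moreover have "LScomp D (Tob D ?P) (iC ?P, w0) (LSproj1 D X Y ?lX ?lY) = Tmor D ?p1"
      unfolding Tob_def LSproj1_def LScomp_fib Tmor_def using fib_post[OF w0(1) bpr_hom(1)] w0(2) by simp
    moreover have "LScomp D (Tob D ?P) (iC ?P, w0) (LSproj2 D X Y ?lX ?lY) = Tmor D ?p2"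
      unfolding Tob_def LSproj2_def LScomp_fib Tmor_def using fib_post[OF w0(1) bpr_hom(2)] w0(3) by simp
    ultimately show ?thesis by blast
  qed
  have uq: "\<exists>!h. ?Q h"
  proof (rule ex1I[where a="(iC ?P, w0)" and P="?Q"])
    show "?Q (iC ?P, w0)" by (rule Q0)
    fix h assume Q: "?Q h"
    have a: "fst h = iC ?P" using char[OF Q] by simp
    have b: "snd h = w0" using bip_pair[OF T1 T2] char[OF Q] w0 by blast
    show "h = (iC ?P, w0)" using a b by (simp add: prod_eq_iff)
  qed
  have "?Q (phi D X Y)" unfolding phi_def by (rule theI'[OF uq])
  then show ?thesis using char by blast
qed


lemma t1: "LSiso D (Tob D (X \<times>\<^sub>c Y)) (X \<times>\<^sub>c Y, bip (LL D) (lam D X) (lam D Y)) (phi D X Y)"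
  by (rule gdU[THEN conjunct2, THEN conjunct2, THEN conjunct2, THEN conjunct2, THEN conjunct2, THEN conjunct2, THEN conjunct1, rule_format])
lemma t2[simp]: "lam D (Uo D A) = A"
  by (rule gdU[THEN conjunct2, THEN conjunct2, THEN conjunct2, THEN conjunct2, THEN conjunct2, THEN conjunct2, THEN conjunct2, THEN conjunct1, rule_format])
lemma t3: "f \<in> homC X Y \<Longrightarrow> u \<in> homL (Fo D X \<odot> A) B \<Longrightarrow>
        LScomp D (prd (CC D) X (Uo D A), A) (Wk D X A f u) (i2 D Y (Uo D B)) =
        LScomp D (prd (CC D) X (Uo D A), lam D (Uo D A)) (i2 D X (Uo D A)) (Tmor D (compr D X A f u))"
  by (rule gdU[THEN conjunct2, THEN conjunct2, THEN conjunct2, THEN conjunct2, THEN conjunct2, THEN conjunct2, THEN conjunct2, THEN conjunct2, rule_format]; assumption)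

lemma i2_fib: "fst (i2 D X Y) = iC (X \<times>\<^sub>c Y) \<and> snd (i2 D X Y) \<in> homL (Fo D (X \<times>\<^sub>c Y) \<odot> lam D Y) (lam D (X \<times>\<^sub>c Y))"
proof -
  let ?P = "X \<times>\<^sub>c Y" and ?B = "bip (LL D) (lam D X) (lam D Y)" and ?lP = "lam D (X \<times>\<^sub>c Y)"
  obtain w where ph: "phi D X Y = (iC ?P, w)" and w: "w \<in> homL (Fo D ?P \<odot> ?lP) ?B"
    using phi_fib[of X Y] by (cases "phi D X Y") auto
  have ex: "\<exists>k. k \<in> LShom D (?P, ?B) (?P, ?lP) \<and> LScomp D (?P, ?lP) (iC ?P, w) k = LSid D (?P, ?lP) \<and> LScomp D (?P, ?B) k (iC ?P, w) = LSid D (?P, ?B)"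
    using t1[of X Y] unfolding LSiso_def ph Tob_def by blast
  obtain k where k: "LSinv D (?P, ?lP) (?P, ?B) (iC ?P, w) = k" by blast
  have kf: "fst k = iC ?P" and ks: "snd k \<in> homL (Fo D ?P \<odot> ?B) ?lP"
    using LSinv_fib[OF w ex] k by auto
  have i2e: "i2 D X Y = LScomp D (?P, lam D Y) (iC ?P, ww D ?P \<otimes> bin2 (LL D) (lam D X) (lam D Y)) k"
    unfolding i2_def LSinj2_def ph Tob_def k by simp
  have a: "cc D ?P \<otimes> iL (lam D Y) \<in> homL (Fo D ?P \<odot> lam D Y) (Fo D ?P \<odot> Fo D ?P \<odot> lam D Y)"
    using tenm_hom[OF cc_hom L_id] by simp
  have b: "iL (Fo D ?P) \<otimes> (ww D ?P \<otimes> bin2 (LL D) (lam D X) (lam D Y)) \<in> homL (Fo D ?P \<odot> Fo D ?P \<odot> lam D Y) (Fo D ?P \<odot> ?B)"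
    using tenm_hom[OF L_id tenm_hom[OF ww_hom bin2_hom]] by simp
  show ?thesis unfolding i2e using kf ks a b
    by (cases k) (auto simp: LScomp_fib intro!: L_cmp)
qed


lemmas funUU = lnlU[THEN conjunct2, THEN conjunct2, THEN conjunct2, THEN conjunct1, unfolded is_functor_def]
lemma U_hom: "g \<in> homL A B \<Longrightarrow> Um D g \<in> homC (Uo D A) (Uo D B)"
  by (rule funUU[THEN conjunct1, rule_format])
lemma nU_hom: "nU D A B \<in> homC (Uo D A \<times>\<^sub>c Uo D B) (Uo D (A \<odot> B))"
  by (rule lnlU[THEN conjunct2, THEN conjunct2, THEN conjunct2, THEN conjunct2, THEN conjunct2, THEN conjunct2, THEN conjunct2, THEN conjunct2, THEN conjunct2, THEN conjunct2, THEN conjunct1, rule_format])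
lemma eta_hom: "eta D X \<in> homC X (Uo D (Fo D X))"
  by (rule lnlU[THEN conjunct2, THEN conjunct2, THEN conjunct2, THEN conjunct2, THEN conjunct2, THEN conjunct2, THEN conjunct2, THEN conjunct2, THEN conjunct2, THEN conjunct2, THEN conjunct2, THEN conjunct2, THEN conjunct2, THEN conjunct2, THEN conjunct2, THEN conjunct2, THEN conjunct1, rule_format])

lemma compr_hom: assumes f: "f \<in> homC X Y" and u: "u \<in> homL (Fo D X \<odot> A) B"
  shows "compr D X A f u \<in> homC (X \<times>\<^sub>c Uo D A) (Y \<times>\<^sub>c Uo D B)"
  unfolding compr_def
  by (intro tup_hom C_cmp[OF pr1_hom f] C_cmp[OF C_cmp[OF cprodm_hom[OF eta_hom C_id] nU_hom] U_hom[OF u]])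

lemma main: assumes f: "f \<in> homC X Y" and u: "u \<in> homL (Fo D X \<odot> A) B"
  shows "D2 D X (Uo D A) (compr D X A f u) =
     LScomp D (prd (CC D) X (Uo D A), A)
       (reindex D (prd (CC D) X (Uo D A)) (pr1 (CC D) X (Uo D A)) A (idt (CC D) X, u))
       (reindex D (prd (CC D) X (Uo D A)) (compr D X A f u) (lam D (Uo D B)) (i2 D Y (Uo D B)))"
proof -
  let ?P = "X \<times>\<^sub>c Uo D A" and ?Q = "Y \<times>\<^sub>c Uo D B" and ?c = "compr D X A f u"
  have c: "?c \<in> homC ?P ?Q" by (rule compr_hom[OF f u])
  obtain s where sX: "i2 D X (Uo D A) = (iC ?P, s)" and s: "s \<in> homL (Fo D ?P \<odot> A) (lam D ?P)"
    using i2_fib[of X "Uo D A"] by (cases "i2 D X (Uo D A)") auto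
  obtain s' where sY: "i2 D Y (Uo D B) = (iC ?Q, s')" and s': "s' \<in> homL (Fo D ?Q \<odot> B) (lam D ?Q)"
    using i2_fib[of Y "Uo D B"] by (cases "i2 D Y (Uo D B)") auto
  let ?v = "(Fm D (pr1 (CC D) X (Uo D A)) \<otimes> iL A) \<cdot> u"
  have v: "?v \<in> homL (Fo D ?P \<odot> A) B" using tenm_hom[OF F_hom[OF pr1_hom] L_id] u by blast
  have Fc: "Fm D ?c \<in> homL (Fo D ?P) (Fo D ?Q)" using c by blast
  have a: "cc D ?P \<otimes> iL A \<in> homL (Fo D ?P \<odot> A) (Fo D ?P \<odot> Fo D ?P \<odot> A)"
    using tenm_hom[OF cc_hom L_id] by simp
  have iv: "iL (Fo D ?P) \<otimes> ?v \<in> homL (Fo D ?P \<odot> Fo D ?P \<odot> A) (Fo D ?P \<odot> B)"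
    using tenm_hom[OF L_id v] by simp
  have cB: "Fm D ?c \<otimes> iL B \<in> homL (Fo D ?P \<odot> B) (Fo D ?Q \<odot> B)" using tenm_hom[OF Fc L_id] by simp
  have E: "(cc D ?P \<otimes> iL A) \<cdot> (Fm D ?c \<otimes> ?v) \<cdot> s' = (cc D ?P \<otimes> iL A) \<cdot> (iL (Fo D ?P) \<otimes> s) \<cdot> Tv D ?c"
  proof -
    have "LScomp D (?P, A) (Wk D X A f u) (i2 D Y (Uo D B)) = LScomp D (?P, A) (i2 D X (Uo D A)) (Tmor D ?c)"
      using t3[OF f u] by simp
    then show ?thesis unfolding Wk_def sX sY LScomp_def Tmor_def by simp
  qed
  have "D2 D X (Uo D A) ?c = (iC ?P, (cc D ?P \<otimes> iL A) \<cdot> (iL (Fo D ?P) \<otimes> s) \<cdot> Tv D ?c)"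
    unfolding D2_def sX Dm_def by (simp add: LScomp_fib)
  also have "\<dots> = (iC ?P, (cc D ?P \<otimes> iL A) \<cdot> (Fm D ?c \<otimes> ?v) \<cdot> s')" using E by simp
  also have "\<dots> = (iC ?P, (cc D ?P \<otimes> iL A) \<cdot> (iL (Fo D ?P) \<otimes> ?v) \<cdot> ((Fm D ?c \<otimes> iL B) \<cdot> s'))"
  proof -
    have "Fm D ?c \<otimes> ?v = (iL (Fo D ?P) \<cdot> Fm D ?c) \<otimes> (?v \<cdot> iL B)" using Fc v by simp
    also have "\<dots> = (iL (Fo D ?P) \<otimes> ?v) \<cdot> (Fm D ?c \<otimes> iL B)" by (rule tenm_cmp[OF L_id Fc v L_id])
    finally have e: "Fm D ?c \<otimes> ?v = (iL (Fo D ?P) \<otimes> ?v) \<cdot> (Fm D ?c \<otimes> iL B)" .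
    show ?thesis unfolding e
      using L_assoc[OF a iv cB] L_assoc[OF L_cmp[OF a iv] cB s'] L_assoc[OF a L_cmp[OF iv cB] s']
        L_assoc[OF iv cB s'] by simp
  qed
  also have "\<dots> = LScomp D (?P, A)
       (reindex D ?P (pr1 (CC D) X (Uo D A)) A (idt (CC D) X, u))
       (reindex D ?P ?c (lam D (Uo D B)) (i2 D Y (Uo D B)))"
    unfolding reindex_def sY by (simp add: LScomp_fib)
  finally show ?thesis .
qed

end

theorem proposition4p16:
  fixes D :: "('c,'f,'l,'g) gdsc"
  assumes "is_gdsc D"
    and "f \<in> hom (CC D) X Y"
    and "u \<in> hom (LL D) (ten (LL D) (Fo D X) A) B"
  shows "D2 D X (Uo D A) (compr D X A f u) =
     LScomp D (prd (CC D) X (Uo D A), A)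
       (reindex D (prd (CC D) X (Uo D A)) (pr1 (CC D) X (Uo D A)) A (idt (CC D) X, u))
       (reindex D (prd (CC D) X (Uo D A)) (compr D X A f u) (lam D (Uo D B)) (i2 D Y (Uo D B)))"
proof -
  interpret GDS D by (rule GDS.intro, rule assms(1))
  show ?thesis by (rule main[OF assms(2,3)])
qed

end
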